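(* Let $d,r\in\mathbb{N}$ with $r\ge 1$. Let $P=\mathcal{N}(\mu,\Sigma)$ be a Gaussian distribution on $\mathbb{R}^d$ with mean $\mu\in\mathbb{R}^d$ and symmetric positive-definite covariance matrix $\Sigma$, with density $p$. Let $Q$ be a probability measure on $\mathbb{R}^d$ with finite absolute moments of all orders up to $r$. Define $$\mathrm{PSD}=\sqrt{\sum_{\alpha\in\mathbb{N}_0^d:\,1\le|\alpha|\le r}\Big(\mathbb{E}_{X\sim Q}\big[(\mathcal{A}x^\alpha)(X)\big]\Big)^2}.$$ Then $\mathrm{PSD}=0$ if and only if $\mathbb{E}_{X\sim Q}[X^\alpha]=\mathbb{E}_{X\sim P}[X^\alpha]$ for every multi-index $\alpha\in\mathbb{N}_0^d$ with $|\alpha|\le r$ (i.e. all multi-index moments of $P$ and $Q$ agree up to order $r$).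
   Context: For $x\in\mathbb{R}^d$ write $x[i]$ for its $i$th coordinate and, for a multi-index $\alpha\in\mathbb{N}_0^d$, $x^\alpha=\prod_{i=1}^d x[i]^{\alpha_i}$ and $|\alpha|=\sum_i\alpha_i$. The (second-order Langevin) Stein operator associated with $p$ acts on twice differentiable $g:\mathbb{R}^d\to\mathbb{R}$ by $(\mathcal{A}g)(x)=\Delta g(x)+\nabla g(x)\cdot\nabla\log p(x)$, where $\Delta$ is the Laplacian; for the Gaussian $P$, $\nabla\log p(x)=-\Sigma^{-1}(x-\mu)$. $\mathrm{PSD}$ (polynomial Stein discrepancy of order $r$) is the supremum of $|\mathbb{E}_Q[\mathcal{A}g]|$ over $g=\sum_\alpha\beta_\alpha x^\alpha$ ($1\le|\alpha|\le r$) with $\|\beta\|_2\le1$, which equals the displayed formula. *)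

theory Defs
  imports "HOL-Probability.Probability"
begin

text \<open>Multi-indices on the coordinate index type 'n (dimension d = CARD('n)).\<close>

definition mi_order :: "('n::finite \<Rightarrow> nat) \<Rightarrow> nat" where
  "mi_order \<alpha> = (\<Sum>i\<in>UNIV. \<alpha> i)"

definition monomial :: "('n::finite \<Rightarrow> nat) \<Rightarrow> real^'n \<Rightarrow> real" where
  "monomial \<alpha> x = (\<Prod>i\<in>UNIV. (x $ i) ^ (\<alpha> i))"

definition partial :: "'n::finite \<Rightarrow> (real^'n \<Rightarrow> real) \<Rightarrow> real^'n \<Rightarrow> real" where
  "partial i g x = deriv (\<lambda>t. g (x + t *\<^sub>R axis i 1)) 0"

definition laplacian :: "(real^'n::finite \<Rightarrow> real) \<Rightarrow> real^'n \<Rightarrow> real" where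
  "laplacian g x = (\<Sum>i\<in>UNIV. partial i (partial i g) x)"

text \<open>Score of the Gaussian N(mu, Sigma): grad log p(x) = - Sigma^{-1} (x - mu).\<close>

definition gauss_score :: "real^'n::finite \<Rightarrow> real^'n^'n \<Rightarrow> real^'n \<Rightarrow> real^'n" where
  "gauss_score \<mu> \<Sigma> x = - (matrix_inv \<Sigma> *v (x - \<mu>))"

definition stein_op :: "real^'n::finite \<Rightarrow> real^'n^'n \<Rightarrow> (real^'n \<Rightarrow> real) \<Rightarrow> real^'n \<Rightarrow> real" where
  "stein_op \<mu> \<Sigma> g x = laplacian g x + (\<Sum>i\<in>UNIV. partial i g x * (gauss_score \<mu> \<Sigma> x) $ i)"

definition gauss_density :: "real^'n::finite \<Rightarrow> real^'n^'n \<Rightarrow> real^'n \<Rightarrow> real" where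
  "gauss_density \<mu> \<Sigma> x =
     exp (- ((x - \<mu>) \<bullet> (matrix_inv \<Sigma> *v (x - \<mu>))) / 2)
     / sqrt ((2 * pi) ^ CARD('n) * det \<Sigma>)"

definition gaussian :: "real^'n::finite \<Rightarrow> real^'n^'n \<Rightarrow> (real^'n) measure" where
  "gaussian \<mu> \<Sigma> = density lborel (\<lambda>x. ennreal (gauss_density \<mu> \<Sigma> x))"

definition sym_pos_def :: "real^'n::finite^'n \<Rightarrow> bool" where
  "sym_pos_def \<Sigma> \<longleftrightarrow> transpose \<Sigma> = \<Sigma> \<and> (\<forall>v. v \<noteq> 0 \<longrightarrow> v \<bullet> (\<Sigma> *v v) > 0)"

definition PSD :: "nat \<Rightarrow> real^'n::finite \<Rightarrow> real^'n^'n \<Rightarrow> (real^'n) measure \<Rightarrow> real" where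
  "PSD r \<mu> \<Sigma> Q = sqrt (\<Sum>\<alpha>\<in>{\<alpha>::'n \<Rightarrow> nat. 1 \<le> mi_order \<alpha> \<and> mi_order \<alpha> \<le> r}.
       (\<integral>x. stein_op \<mu> \<Sigma> (monomial \<alpha>) x \<partial>Q)\<^sup>2)"

end

theory Submission
  imports Defs
begin

lemma axis_shift_comp: "(x + t *\<^sub>R axis i 1) $ j = (if j = i then x $ j + t else (x::real^'n::finite) $ j)"
  by (simp add: axis_def)

lemma mono_split: "monomial \<beta> y = y $ i ^ \<beta> i * (\<Prod>j\<in>UNIV-{i}. y $ j ^ \<beta> j)"
  unfolding monomial_def by (simp add: prod.remove)

lemma mono_shift_deriv:
  fixes x :: "real^'n::finite"
  shows "((\<lambda>t. monomial \<beta> (x + t *\<^sub>R axis i 1)) has_real_derivative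
          (real (\<beta> i) * monomial (\<beta>(i := \<beta> i - 1)) (x + t *\<^sub>R axis i 1))) (at t)"
proof -
  define C where "C = (\<Prod>j\<in>UNIV-{i}. x $ j ^ \<beta> j)"
  have e1: "monomial \<beta> (x + s *\<^sub>R axis i 1) = (x $ i + s) ^ \<beta> i * C" for s
    unfolding mono_split[of \<beta> _ i] C_def axis_shift_comp by (auto intro!: prod.cong)
  have e2: "monomial (\<beta>(i := \<beta> i - 1)) (x + s *\<^sub>R axis i 1) = (x $ i + s) ^ (\<beta> i - 1) * C" for s
    unfolding mono_split[of _ _ i] C_def axis_shift_comp by (auto intro!: prod.cong)
  have "((\<lambda>t. (x $ i + t) ^ \<beta> i * C) has_real_derivative
          (real (\<beta> i) * (x $ i + t) ^ (\<beta> i - 1) * C)) (at t)"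
    by (auto intro!: derivative_eq_intros)
  then show ?thesis unfolding e1 e2 by (simp add: mult.assoc)
qed

lemma partial_mono: "partial i (monomial \<beta>) x = real (\<beta> i) * monomial (\<beta>(i := \<beta> i - 1)) x"
  unfolding partial_def using DERIV_imp_deriv[OF mono_shift_deriv[of \<beta> x i 0]] by simp

lemma partial_mono_fun: "partial i (monomial \<beta>) = (\<lambda>x. real (\<beta> i) * monomial (\<beta>(i := \<beta> i - 1)) x)"
  using partial_mono by blast

lemma partial_partial_mono:
  "partial i (partial i (monomial \<beta>)) x =
     real (\<beta> i) * real (\<beta> i - 1) * monomial (\<beta>(i := \<beta> i - 1 - 1)) x"
proof -
  have "((\<lambda>t. real (\<beta> i) * monomial (\<beta>(i := \<beta> i - 1)) (x + t *\<^sub>R axis i 1)) has_real_derivative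
     real (\<beta> i) * (real (\<beta> i - 1) * monomial (\<beta>(i := \<beta> i - 1 - 1)) (x + 0 *\<^sub>R axis i 1))) (at 0)"
    using DERIV_cmult[OF mono_shift_deriv[of "\<beta>(i := \<beta> i - 1)" x i 0], of "real (\<beta> i)"] by simp
  then show ?thesis unfolding partial_mono_fun unfolding partial_def
    by (simp add: DERIV_imp_deriv mult.assoc)
qed

lemma stein_mono:
  "stein_op \<mu> \<Sigma> (monomial \<alpha>) x =
     (\<Sum>i\<in>UNIV. real (\<alpha> i) * real (\<alpha> i - 1) * monomial (\<alpha>(i := \<alpha> i - 1 - 1)) x)
   - (\<Sum>i\<in>UNIV. \<Sum>l\<in>UNIV. real (\<alpha> i) * matrix_inv \<Sigma> $ i $ l * monomial ((\<alpha>(i := \<alpha> i - 1))(l := (\<alpha>(i := \<alpha> i - 1)) l + 1)) x)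
   + (\<Sum>i\<in>UNIV. \<Sum>l\<in>UNIV. real (\<alpha> i) * matrix_inv \<Sigma> $ i $ l * \<mu> $ l * monomial (\<alpha>(i := \<alpha> i - 1)) x)"
proof -
  have inc: "monomial (\<gamma>(l := \<gamma> l + 1)) x = monomial \<gamma> x * x $ l" for \<gamma> l
    unfolding mono_split[of _ _ l] by simp
  have "(\<Sum>i\<in>UNIV. partial i (monomial \<alpha>) x * gauss_score \<mu> \<Sigma> x $ i)
     = (\<Sum>i\<in>UNIV. real (\<alpha> i) * monomial (\<alpha>(i := \<alpha> i - 1)) x * (- (\<Sum>l\<in>UNIV. matrix_inv \<Sigma> $ i $ l * (x $ l - \<mu> $ l))))"
    unfolding gauss_score_def partial_mono by (simp add: matrix_vector_mult_def)
  also have "\<dots> = - (\<Sum>i\<in>UNIV. \<Sum>l\<in>UNIV. real (\<alpha> i) * matrix_inv \<Sigma> $ i $ l * monomial ((\<alpha>(i := \<alpha> i - 1))(l := (\<alpha>(i := \<alpha> i - 1)) l + 1)) x)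
   + (\<Sum>i\<in>UNIV. \<Sum>l\<in>UNIV. real (\<alpha> i) * matrix_inv \<Sigma> $ i $ l * \<mu> $ l * monomial (\<alpha>(i := \<alpha> i - 1)) x)"
    unfolding inc
    apply (simp add: sum_distrib_left sum_distrib_right algebra_simps)
    apply (simp add: sum_subtractf)
    done
  finally show ?thesis unfolding stein_op_def laplacian_def partial_partial_mono by simp
qed

abbreviation decr :: "('n \<Rightarrow> nat) \<Rightarrow> 'n \<Rightarrow> ('n \<Rightarrow> nat)" where "decr \<alpha> i \<equiv> \<alpha>(i := \<alpha> i - 1)"
abbreviation incr :: "('n \<Rightarrow> nat) \<Rightarrow> 'n \<Rightarrow> ('n \<Rightarrow> nat)" where "incr \<alpha> i \<equiv> \<alpha>(i := \<alpha> i + 1)"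

lemma mo_upd: "mi_order (\<alpha>(i := v)) + \<alpha> i = mi_order \<alpha> + (v::nat)"
  unfolding mi_order_def by (simp add: sum.remove[of UNIV i] sum.remove[of UNIV i "\<alpha>(i:=v)"])

lemma mo_incr: "mi_order (incr \<gamma> i) = mi_order \<gamma> + 1"
  using mo_upd[of \<gamma> i "\<gamma> i + 1"] by simp

lemma mo_incr': "mi_order (\<gamma>(i := Suc (\<gamma> i))) = Suc (mi_order \<gamma>)"
  using mo_incr[of \<gamma> i] by simp

lemma mo_decr: "\<alpha> i \<ge> 1 \<Longrightarrow> mi_order (decr \<alpha> i) + 1 = mi_order \<alpha>"
  using mo_upd[of \<alpha> i "\<alpha> i - 1"] by simp

lemma mo_le: "v \<le> \<alpha> i \<Longrightarrow> mi_order (\<alpha>(i := v)) \<le> mi_order \<alpha>"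
  using mo_upd[of \<alpha> i v] by simp

lemma comp_le_mo: "\<alpha> i \<le> mi_order \<alpha>"
  unfolding mi_order_def by (rule member_le_sum) auto

lemma finite_mo_le: "finite {\<alpha>::'n::finite \<Rightarrow> nat. mi_order \<alpha> \<le> r}"
proof -
  have "{\<alpha>::'n \<Rightarrow> nat. mi_order \<alpha> \<le> r} \<subseteq> PiE UNIV (\<lambda>_. {..r})"
    using comp_le_mo by (auto simp: PiE_def Pi_def intro: order_trans)
  moreover have "finite (PiE (UNIV::'n set) (\<lambda>_. {..r}))" by (rule finite_PiE) auto
  ultimately show ?thesis by (metis finite_subset)
qed

lemma finite_mo_eq: "finite {\<alpha>::'n::finite \<Rightarrow> nat. mi_order \<alpha> = r}"
  by (rule finite_subset[OF _ finite_mo_le[of r]]) auto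

definition Lin :: "real^'n^'n \<Rightarrow> real^'n::finite \<Rightarrow> (('n \<Rightarrow> nat) \<Rightarrow> real) \<Rightarrow> ('n \<Rightarrow> nat) \<Rightarrow> real" where
  "Lin S \<mu> m \<alpha> =
     (\<Sum>i\<in>UNIV. real (\<alpha> i) * real (\<alpha> i - 1) * m (\<alpha>(i := \<alpha> i - 1 - 1)))
   - (\<Sum>i\<in>UNIV. \<Sum>l\<in>UNIV. real (\<alpha> i) * S $ i $ l * m (incr (decr \<alpha> i) l))
   + (\<Sum>i\<in>UNIV. \<Sum>l\<in>UNIV. real (\<alpha> i) * S $ i $ l * \<mu> $ l * m (decr \<alpha> i))"

definition mint :: "(real^'n::finite) measure \<Rightarrow> nat \<Rightarrow> bool" where
  "mint R k \<longleftrightarrow> (\<forall>\<beta>. mi_order \<beta> \<le> k \<longrightarrow> integrable R (monomial \<beta>))"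

lemma integral_stein_mono:
  assumes "mint R (mi_order \<alpha>)"
  shows "(\<integral>x. stein_op \<mu> \<Sigma> (monomial \<alpha>) x \<partial>R) = Lin (matrix_inv \<Sigma>) \<mu> (\<lambda>\<beta>. \<integral>x. monomial \<beta> x \<partial>R) \<alpha>"
proof -
  let ?S = "matrix_inv \<Sigma>"
  have I1: "integrable R (\<lambda>x. real (\<alpha> i) * real (\<alpha> i - 1) * monomial (\<alpha>(i := \<alpha> i - 1 - 1)) x)" for i
    using assms mo_le[of "\<alpha> i - 1 - 1" \<alpha> i] unfolding mint_def by auto
  have I2: "integrable R (\<lambda>x. real (\<alpha> i) * ?S $ i $ l * monomial (incr (decr \<alpha> i) l) x)" for i l
  proof (cases "\<alpha> i = 0")
    case True then show ?thesis by simp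
  next
    case False
    then have "mi_order (incr (decr \<alpha> i) l) = mi_order \<alpha>"
      using mo_incr[of "decr \<alpha> i" l] mo_decr[of \<alpha> i] by simp
    then show ?thesis using assms unfolding mint_def by auto
  qed
  have I3: "integrable R (\<lambda>x. real (\<alpha> i) * ?S $ i $ l * \<mu> $ l * monomial (decr \<alpha> i) x)" for i l
    using assms mo_le[of "\<alpha> i - 1" \<alpha> i] unfolding mint_def by auto
  have "(\<integral>x. stein_op \<mu> \<Sigma> (monomial \<alpha>) x \<partial>R) =
     (\<integral>x. (\<Sum>i\<in>UNIV. real (\<alpha> i) * real (\<alpha> i - 1) * monomial (\<alpha>(i := \<alpha> i - 1 - 1)) x)
   - (\<Sum>i\<in>UNIV. \<Sum>l\<in>UNIV. real (\<alpha> i) * ?S $ i $ l * monomial (incr (decr \<alpha> i) l) x)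
   + (\<Sum>i\<in>UNIV. \<Sum>l\<in>UNIV. real (\<alpha> i) * ?S $ i $ l * \<mu> $ l * monomial (decr \<alpha> i) x) \<partial>R)"
    unfolding stein_mono by simp
  also have "\<dots> = Lin ?S \<mu> (\<lambda>\<beta>. \<integral>x. monomial \<beta> x \<partial>R) \<alpha>"
  proof -
    have i1: "integrable R (\<lambda>x. \<Sum>i\<in>UNIV. real (\<alpha> i) * real (\<alpha> i - 1) * monomial (\<alpha>(i := \<alpha> i - 1 - 1)) x)"
      by (rule Bochner_Integration.integrable_sum) (rule I1)
    have i2: "integrable R (\<lambda>x. \<Sum>i\<in>UNIV. \<Sum>l\<in>UNIV. real (\<alpha> i) * ?S $ i $ l * monomial (incr (decr \<alpha> i) l) x)"
      by (rule Bochner_Integration.integrable_sum, rule Bochner_Integration.integrable_sum) (rule I2)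
    have i3: "integrable R (\<lambda>x. \<Sum>i\<in>UNIV. \<Sum>l\<in>UNIV. real (\<alpha> i) * ?S $ i $ l * \<mu> $ l * monomial (decr \<alpha> i) x)"
      by (rule Bochner_Integration.integrable_sum, rule Bochner_Integration.integrable_sum) (rule I3)
    have s1: "(\<integral>x. (\<Sum>i\<in>UNIV. real (\<alpha> i) * real (\<alpha> i - 1) * monomial (\<alpha>(i := \<alpha> i - 1 - 1)) x) \<partial>R)
       = (\<Sum>i\<in>UNIV. real (\<alpha> i) * real (\<alpha> i - 1) * (\<integral>x. monomial (\<alpha>(i := \<alpha> i - 1 - 1)) x \<partial>R))"
      by (subst Bochner_Integration.integral_sum) (rule I1, simp)
    have s2: "(\<integral>x. (\<Sum>i\<in>UNIV. \<Sum>l\<in>UNIV. real (\<alpha> i) * ?S $ i $ l * monomial (incr (decr \<alpha> i) l) x) \<partial>R)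
       = (\<Sum>i\<in>UNIV. \<Sum>l\<in>UNIV. real (\<alpha> i) * ?S $ i $ l * (\<integral>x. monomial (incr (decr \<alpha> i) l) x \<partial>R))"
      apply (subst Bochner_Integration.integral_sum)
       apply (rule Bochner_Integration.integrable_sum, rule I2)
      apply (rule sum.cong[OF refl])
      apply (subst Bochner_Integration.integral_sum)
       apply (rule I2)
      apply simp
      done
    have s3: "(\<integral>x. (\<Sum>i\<in>UNIV. \<Sum>l\<in>UNIV. real (\<alpha> i) * ?S $ i $ l * \<mu> $ l * monomial (decr \<alpha> i) x) \<partial>R)
       = (\<Sum>i\<in>UNIV. \<Sum>l\<in>UNIV. real (\<alpha> i) * ?S $ i $ l * \<mu> $ l * (\<integral>x. monomial (decr \<alpha> i) x \<partial>R))"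
      apply (subst Bochner_Integration.integral_sum)
       apply (rule Bochner_Integration.integrable_sum, rule I3)
      apply (rule sum.cong[OF refl])
      apply (subst Bochner_Integration.integral_sum)
       apply (rule I3)
      apply simp
      done
    show ?thesis
      unfolding Lin_def
      apply (subst Bochner_Integration.integral_add[OF Bochner_Integration.integrable_diff[OF i1 i2] i3])
      apply (subst Bochner_Integration.integral_diff[OF i1 i2])
      apply (simp only: s1 s2 s3)
      done
  qed
  finally show ?thesis .
qed

lemma Lin_local:
  assumes "\<And>\<beta>. mi_order \<beta> \<le> mi_order \<alpha> \<Longrightarrow> m \<beta> = m' \<beta>"
  shows "Lin S \<mu> m \<alpha> = Lin S \<mu> m' \<alpha>"
proof -
  have a: "real (\<alpha> i) * real (\<alpha> i - 1) * m (\<alpha>(i := \<alpha> i - 1 - 1)) = real (\<alpha> i) * real (\<alpha> i - 1) * m' (\<alpha>(i := \<alpha> i - 1 - 1))" for i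
    using assms[OF mo_le[of "\<alpha> i - 1 - 1" \<alpha> i]] by simp
  have b: "real (\<alpha> i) * S $ i $ l * m (incr (decr \<alpha> i) l) = real (\<alpha> i) * S $ i $ l * m' (incr (decr \<alpha> i) l)" for i l
  proof (cases "\<alpha> i = 0")
    case False
    then have "mi_order (incr (decr \<alpha> i) l) = mi_order \<alpha>"
      using mo_incr[of "decr \<alpha> i" l] mo_decr[of \<alpha> i] by simp
    then show ?thesis using assms by simp
  qed simp
  have c: "real (\<alpha> i) * S $ i $ l * \<mu> $ l * m (decr \<alpha> i) = real (\<alpha> i) * S $ i $ l * \<mu> $ l * m' (decr \<alpha> i)" for i l
    using assms[OF mo_le[of "\<alpha> i - 1" \<alpha> i]] by simp
  show ?thesis unfolding Lin_def by (simp only: a b c)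
qed

lemma Lin_diff: "Lin S \<mu> (\<lambda>\<beta>. m \<beta> - m' \<beta>) \<alpha> = Lin S \<mu> m \<alpha> - Lin S \<mu> m' \<alpha>"
  unfolding Lin_def by (simp add: algebra_simps sum_subtractf)

lemma Lin_top:
  assumes "\<And>\<beta>. mi_order \<beta> < mi_order \<alpha> \<Longrightarrow> d \<beta> = 0"
  shows "Lin S \<mu> d \<alpha> = - (\<Sum>i\<in>UNIV. \<Sum>l\<in>UNIV. real (\<alpha> i) * S $ i $ l * d (incr (decr \<alpha> i) l))"
proof -
  have a: "real (\<alpha> i) * real (\<alpha> i - 1) * d (\<alpha>(i := \<alpha> i - 1 - 1)) = 0" for i
  proof (cases "\<alpha> i \<ge> 2")
    case True
    then have "mi_order (\<alpha>(i := \<alpha> i - 1 - 1)) < mi_order \<alpha>" using mo_upd[of \<alpha> i "\<alpha> i - 1 - 1"] by simp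
    then show ?thesis using assms by simp
  next
    case False then have "\<alpha> i = 0 \<or> \<alpha> i = 1" by auto
    then show ?thesis by auto
  qed
  have c: "real (\<alpha> i) * S $ i $ l * \<mu> $ l * d (decr \<alpha> i) = 0" for i l
  proof (cases "\<alpha> i = 0")
    case False
    then have "mi_order (decr \<alpha> i) < mi_order \<alpha>" using mo_decr[of \<alpha> i] by simp
    then show ?thesis using assms by simp
  qed simp
  show ?thesis unfolding Lin_def a c by simp
qed

lemma decr_incr[simp]: "decr (incr \<gamma> i) i = \<gamma>"
  by simp

definition mfact :: "('n::finite \<Rightarrow> nat) \<Rightarrow> real" where
  "mfact \<gamma> = (\<Prod>i\<in>UNIV. fact (\<gamma> i))"

lemma mfact_pos: "mfact \<gamma> > 0"
  unfolding mfact_def by (rule prod_pos) auto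

lemma mfact_incr: "mfact (incr \<gamma> i) = mfact \<gamma> * (real (\<gamma> i) + 1)"
  unfolding mfact_def
  by (simp add: prod.remove[of UNIV i] prod.remove[of UNIV i "\<lambda>j. fact (\<gamma> j)"] algebra_simps)

lemma quad_step:
  fixes S :: "real^'n::finite^'n"
  assumes pd: "\<And>v. v \<noteq> 0 \<Longrightarrow> v \<bullet> (S *v v) > 0"
    and k: "k \<ge> 1"
    and h: "\<And>\<alpha>. mi_order \<alpha> = k \<Longrightarrow> (\<Sum>i\<in>UNIV. \<Sum>l\<in>UNIV. real (\<alpha> i) * S $ i $ l * d (incr (decr \<alpha> i) l)) = 0"
  shows "\<And>\<beta>. mi_order \<beta> = k \<Longrightarrow> d \<beta> = 0"
proof -
  let ?A = "{\<alpha>::'n \<Rightarrow> nat. mi_order \<alpha> = k}"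
  let ?G = "{\<gamma>::'n \<Rightarrow> nat. mi_order \<gamma> = k - 1}"
  define v where "v \<gamma> = (\<chi> i. d (incr \<gamma> i))" for \<gamma>
  have qf: "v \<gamma> \<bullet> (S *v v \<gamma>) = (\<Sum>i\<in>UNIV. \<Sum>l\<in>UNIV. d (incr \<gamma> i) * S $ i $ l * d (incr \<gamma> l))" for \<gamma>
    unfolding v_def by (simp add: inner_vec_def matrix_vector_mult_def sum_distrib_left algebra_simps)
  have img: "(\<lambda>\<gamma>. incr \<gamma> i) ` ?G = {\<alpha>. mi_order \<alpha> = k \<and> \<alpha> i \<ge> 1}" for i
  proof
    show "(\<lambda>\<gamma>. incr \<gamma> i) ` ?G \<subseteq> {\<alpha>. mi_order \<alpha> = k \<and> \<alpha> i \<ge> 1}"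
      using k by (auto simp: mo_incr')
    show "{\<alpha>. mi_order \<alpha> = k \<and> \<alpha> i \<ge> 1} \<subseteq> (\<lambda>\<gamma>. incr \<gamma> i) ` ?G"
    proof
      fix \<alpha> assume a: "\<alpha> \<in> {\<alpha>. mi_order \<alpha> = k \<and> \<alpha> i \<ge> 1}"
      then have "\<alpha> = incr (decr \<alpha> i) i" by auto
      moreover have "decr \<alpha> i \<in> ?G" using a mo_decr[of \<alpha> i] by auto
      ultimately show "\<alpha> \<in> (\<lambda>\<gamma>. incr \<gamma> i) ` ?G" by blast
    qed
  qed
  have inj: "inj_on (\<lambda>\<gamma>. incr \<gamma> i) X" for i X
    by (rule inj_onI) (metis fun_upd_idem_iff fun_upd_upd add_right_cancel)
  have fin: "finite ?A" "finite ?G" using finite_mo_eq by auto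
  have "0 = (\<Sum>\<alpha>\<in>?A. d \<alpha> / mfact \<alpha> * (\<Sum>i\<in>UNIV. \<Sum>l\<in>UNIV. real (\<alpha> i) * S $ i $ l * d (incr (decr \<alpha> i) l)))"
    using h by simp
  also have "\<dots> = (\<Sum>i\<in>UNIV. \<Sum>\<alpha>\<in>?A. d \<alpha> / mfact \<alpha> * real (\<alpha> i) * (\<Sum>l\<in>UNIV. S $ i $ l * d (incr (decr \<alpha> i) l)))"
    by (subst sum.swap) (simp add: sum_distrib_left mult.assoc)
  also have "\<dots> = (\<Sum>i\<in>UNIV. \<Sum>\<alpha>\<in>{\<alpha>. mi_order \<alpha> = k \<and> \<alpha> i \<ge> 1}. d \<alpha> / mfact \<alpha> * real (\<alpha> i) * (\<Sum>l\<in>UNIV. S $ i $ l * d (incr (decr \<alpha> i) l)))"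
  proof (rule sum.cong[OF refl])
    fix i
    show "(\<Sum>\<alpha>\<in>?A. d \<alpha> / mfact \<alpha> * real (\<alpha> i) * (\<Sum>l\<in>UNIV. S $ i $ l * d (incr (decr \<alpha> i) l))) =
          (\<Sum>\<alpha>\<in>{\<alpha>. mi_order \<alpha> = k \<and> \<alpha> i \<ge> 1}. d \<alpha> / mfact \<alpha> * real (\<alpha> i) * (\<Sum>l\<in>UNIV. S $ i $ l * d (incr (decr \<alpha> i) l)))"
      by (rule sum.mono_neutral_right) (use fin in auto)
  qed
  also have "\<dots> = (\<Sum>i\<in>UNIV. \<Sum>\<gamma>\<in>?G. d (incr \<gamma> i) / mfact \<gamma> * (\<Sum>l\<in>UNIV. S $ i $ l * d (incr \<gamma> l)))"
  proof (rule sum.cong[OF refl])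
    fix i
    have "(\<Sum>\<alpha>\<in>{\<alpha>. mi_order \<alpha> = k \<and> \<alpha> i \<ge> 1}. d \<alpha> / mfact \<alpha> * real (\<alpha> i) * (\<Sum>l\<in>UNIV. S $ i $ l * d (incr (decr \<alpha> i) l)))
        = (\<Sum>\<gamma>\<in>?G. d (incr \<gamma> i) / mfact (incr \<gamma> i) * real (incr \<gamma> i i) * (\<Sum>l\<in>UNIV. S $ i $ l * d (incr (decr (incr \<gamma> i) i) l)))"
      unfolding img[of i, symmetric] by (subst sum.reindex[OF inj]) (simp only: o_def decr_incr)
    also have "\<dots> = (\<Sum>\<gamma>\<in>?G. d (incr \<gamma> i) / mfact \<gamma> * (\<Sum>l\<in>UNIV. S $ i $ l * d (incr \<gamma> l)))"
    proof (rule sum.cong[OF refl])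
      fix \<gamma>
      have aux: "c \<noteq> 0 \<Longrightarrow> m \<noteq> 0 \<Longrightarrow> a / (m * c) * c * Y = a / m * (Y::real)" for a m c Y
        by (simp add: field_simps)
      have "real (\<gamma> i) + 1 \<noteq> 0" by simp
      then show "d (incr \<gamma> i) / mfact (incr \<gamma> i) * real (incr \<gamma> i i) * (\<Sum>l\<in>UNIV. S $ i $ l * d (incr (decr (incr \<gamma> i) i) l)) =
          d (incr \<gamma> i) / mfact \<gamma> * (\<Sum>l\<in>UNIV. S $ i $ l * d (incr \<gamma> l))"
      proof -
        have e1: "real (incr \<gamma> i i) = real (\<gamma> i) + 1" by simp
        show ?thesis unfolding mfact_incr decr_incr e1
          by (rule aux) (use mfact_pos[of \<gamma>] in auto)
      qed
    qed
    finally show "(\<Sum>\<alpha>\<in>{\<alpha>. mi_order \<alpha> = k \<and> \<alpha> i \<ge> 1}. d \<alpha> / mfact \<alpha> * real (\<alpha> i) * (\<Sum>l\<in>UNIV. S $ i $ l * d (incr (decr \<alpha> i) l)))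
        = (\<Sum>\<gamma>\<in>?G. d (incr \<gamma> i) / mfact \<gamma> * (\<Sum>l\<in>UNIV. S $ i $ l * d (incr \<gamma> l)))" .
  qed
  also have "\<dots> = (\<Sum>\<gamma>\<in>?G. (v \<gamma> \<bullet> (S *v v \<gamma>)) / mfact \<gamma>)"
    unfolding qf by (subst sum.swap) (simp add: sum_divide_distrib sum_distrib_left algebra_simps)
  finally have z: "(\<Sum>\<gamma>\<in>?G. (v \<gamma> \<bullet> (S *v v \<gamma>)) / mfact \<gamma>) = 0" by simp
  have nn: "(v \<gamma> \<bullet> (S *v v \<gamma>)) / mfact \<gamma> \<ge> 0" if "\<gamma> \<in> ?G" for \<gamma>
  proof -
    have "v \<gamma> \<bullet> (S *v v \<gamma>) \<ge> 0" using pd[of "v \<gamma>"] by (cases "v \<gamma> = 0") auto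
    then show "(v \<gamma> \<bullet> (S *v v \<gamma>)) / mfact \<gamma> \<ge> 0" using mfact_pos[of \<gamma>] by simp
  qed
  have allz: "\<forall>\<gamma>\<in>?G. (v \<gamma> \<bullet> (S *v v \<gamma>)) / mfact \<gamma> = 0"
    using sum_nonneg_eq_0_iff[OF fin(2), of "\<lambda>\<gamma>. (v \<gamma> \<bullet> (S *v v \<gamma>)) / mfact \<gamma>"] nn z by auto
  have vz: "v \<gamma> = 0" if "\<gamma> \<in> ?G" for \<gamma>
  proof (rule ccontr)
    assume "v \<gamma> \<noteq> 0"
    then have "(v \<gamma> \<bullet> (S *v v \<gamma>)) / mfact \<gamma> > 0" using pd[of "v \<gamma>"] mfact_pos[of \<gamma>] by simp
    moreover have "(v \<gamma> \<bullet> (S *v v \<gamma>)) / mfact \<gamma> = 0"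
      using allz that by blast
    ultimately show False by simp
  qed
  fix \<beta> :: "'n \<Rightarrow> nat" assume b: "mi_order \<beta> = k"
  then obtain i where i: "\<beta> i \<ge> 1"
    using k unfolding mi_order_def by (metis less_one not_le sum.neutral)
  have "decr \<beta> i \<in> ?G" using b i mo_decr[of \<beta> i] by auto
  then have "v (decr \<beta> i) $ i = 0" using vz by simp
  moreover have "incr (decr \<beta> i) i = \<beta>" using i by auto
  ultimately show "d \<beta> = 0" unfolding v_def by simp
qed

definition qf :: "real^'n::finite^'n \<Rightarrow> real^'n \<Rightarrow> real" where
  "qf M x = x \<bullet> (M *v x)"

lemma qf_sum: "qf M x = (\<Sum>i\<in>UNIV. \<Sum>j\<in>UNIV. x $ i * M $ i $ j * x $ j)"
  unfolding qf_def by (simp add: inner_vec_def matrix_vector_mult_def sum_distrib_left mult.assoc)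

lemma qf_cont: "continuous_on UNIV (qf M)"
  unfolding qf_sum by (intro continuous_intros)

lemma qf_meas[measurable]: "qf M \<in> borel_measurable borel"
  by (rule borel_measurable_continuous_onI[OF qf_cont])

interpretation pl: product_sigma_finite "\<lambda>_::real^'n::finite. lborel :: real measure"
  by standard

lemma nn_integral_lines:
  fixes f :: "real^'n::finite \<Rightarrow> ennreal" and b :: "real^'n"
  assumes [measurable]: "f \<in> borel_measurable borel" and b: "b \<in> Basis"
  shows "(\<integral>\<^sup>+x. f x \<partial>lborel) =
    (\<integral>\<^sup>+g. (\<integral>\<^sup>+y. f ((\<Sum>c\<in>Basis-{b}. g c *\<^sub>R c) + y *\<^sub>R b) \<partial>lborel) \<partial>(PiM (Basis-{b}) (\<lambda>_. lborel)))"
proof -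
  have Bi: "Basis = insert b (Basis - {b})" using b by auto
  have Phi: "(\<Sum>c\<in>Basis. (g(b := y)) c *\<^sub>R c) = (\<Sum>c\<in>Basis-{b}. g c *\<^sub>R c) + y *\<^sub>R b" for g y
    using b by (simp add: sum.remove[of Basis b] add.commute)
  have "(\<integral>\<^sup>+x. f x \<partial>lborel) = (\<integral>\<^sup>+g. f (\<Sum>c\<in>Basis. g c *\<^sub>R c) \<partial>(PiM Basis (\<lambda>_. lborel)))"
    by (subst lborel_eq) (simp add: nn_integral_distr)
  also have "\<dots> = (\<integral>\<^sup>+g. f (\<Sum>c\<in>Basis. g c *\<^sub>R c) \<partial>(PiM (insert b (Basis - {b})) (\<lambda>_. lborel)))"
    using Bi by simp
  also have "\<dots> = (\<integral>\<^sup>+g. (\<integral>\<^sup>+y. f (\<Sum>c\<in>Basis. (g(b := y)) c *\<^sub>R c) \<partial>lborel) \<partial>(PiM (Basis-{b}) (\<lambda>_. lborel)))"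
    by (subst pl.product_nn_integral_insert) (auto simp flip: Bi)
  finally show ?thesis unfolding Phi .
qed

lemma integral_lines:
  fixes f :: "real^'n::finite \<Rightarrow> real" and b :: "real^'n"
  assumes f: "integrable lborel f" and b: "b \<in> Basis"
  shows "(\<integral>x. f x \<partial>lborel) =
    (\<integral>g. (\<integral>y. f ((\<Sum>c\<in>Basis-{b}. g c *\<^sub>R c) + y *\<^sub>R b) \<partial>lborel) \<partial>(PiM (Basis-{b}) (\<lambda>_. lborel)))"
proof -
  have Bi: "Basis = insert b (Basis - {b})" using b by auto
  have Phi: "(\<Sum>c\<in>Basis. (g(b := y)) c *\<^sub>R c) = (\<Sum>c\<in>Basis-{b}. g c *\<^sub>R c) + y *\<^sub>R b" for g y
    using b by (simp add: sum.remove[of Basis b] add.commute)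
  have m: "(\<lambda>g. \<Sum>c\<in>Basis. g c *\<^sub>R c) \<in> PiM Basis (\<lambda>_. lborel) \<rightarrow>\<^sub>M (borel :: (real^'n) measure)"
    by measurable
  have fm: "f \<in> borel_measurable borel" using borel_measurable_integrable[OF f] by simp
  have fi: "integrable (PiM Basis (\<lambda>_. lborel)) (\<lambda>g. f (\<Sum>c\<in>Basis. g c *\<^sub>R c))"
    using f by (subst (asm) lborel_eq) (simp add: integrable_distr_eq[OF m fm])
  have "(\<integral>x. f x \<partial>lborel) = (\<integral>g. f (\<Sum>c\<in>Basis. g c *\<^sub>R c) \<partial>(PiM Basis (\<lambda>_. lborel)))"
    using f by (subst lborel_eq) (simp add: integral_distr[OF m])
  also have "\<dots> = (\<integral>g. f (\<Sum>c\<in>Basis. g c *\<^sub>R c) \<partial>(PiM (insert b (Basis - {b})) (\<lambda>_. lborel)))"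
    using Bi by simp
  also have "\<dots> = (\<integral>g. (\<integral>y. f (\<Sum>c\<in>Basis. (g(b := y)) c *\<^sub>R c) \<partial>lborel) \<partial>(PiM (Basis-{b}) (\<lambda>_. lborel)))"
    by (subst pl.product_integral_insert) (use fi Bi in auto)
  finally show ?thesis unfolding Phi .
qed

lemma integral_zero_by_lines:
  fixes f :: "real^'n::finite \<Rightarrow> real" and b :: "real^'n"
  assumes f: "integrable lborel f" and b: "b \<in> Basis"
    and z: "\<And>x0. (\<integral>y. f (x0 + y *\<^sub>R b) \<partial>lborel) = 0"
  shows "(\<integral>x. f x \<partial>lborel) = 0"
  unfolding integral_lines[OF f b] z by simp

lemma nn_shear:
  fixes f :: "real^'n::finite \<Rightarrow> ennreal" and b :: "real^'n" and c :: "real^'n \<Rightarrow> real"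
  assumes [measurable]: "f \<in> borel_measurable borel" "c \<in> borel_measurable borel" and b: "b \<in> Basis"
    and inv: "\<And>x t. c (x + t *\<^sub>R b) = c x"
  shows "(\<integral>\<^sup>+x. f (x + c x *\<^sub>R b) \<partial>lborel) = (\<integral>\<^sup>+x. f x \<partial>lborel)"
proof -
  have "(\<integral>\<^sup>+x. f (x + c x *\<^sub>R b) \<partial>lborel) =
    (\<integral>\<^sup>+g. (\<integral>\<^sup>+y. f (((\<Sum>c\<in>Basis-{b}. g c *\<^sub>R c) + y *\<^sub>R b) + c ((\<Sum>c\<in>Basis-{b}. g c *\<^sub>R c) + y *\<^sub>R b) *\<^sub>R b) \<partial>lborel) \<partial>(PiM (Basis-{b}) (\<lambda>_. lborel)))"
    by (rule nn_integral_lines[OF _ b]) measurable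
  also have "\<dots> = (\<integral>\<^sup>+g. (\<integral>\<^sup>+y. f ((\<Sum>c\<in>Basis-{b}. g c *\<^sub>R c) + y *\<^sub>R b) \<partial>lborel) \<partial>(PiM (Basis-{b}) (\<lambda>_. lborel)))"
  proof (rule nn_integral_cong)
    fix g
    define x0 where "x0 = (\<Sum>c\<in>Basis-{b}. g c *\<^sub>R c)"
    have "(\<integral>\<^sup>+y. f ((x0 + y *\<^sub>R b) + c (x0 + y *\<^sub>R b) *\<^sub>R b) \<partial>lborel) = (\<integral>\<^sup>+y. f (x0 + (c x0 + y) *\<^sub>R b) \<partial>lborel)"
      by (simp add: inv algebra_simps)
    also have "\<dots> = (\<integral>\<^sup>+y. f (x0 + y *\<^sub>R b) \<partial>distr lborel borel ((+) (c x0)))"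
      by (subst nn_integral_distr) auto
    also have "\<dots> = (\<integral>\<^sup>+y. f (x0 + y *\<^sub>R b) \<partial>lborel)"
      by (simp add: lborel_distr_plus)
    finally show "(\<integral>\<^sup>+y. f (((\<Sum>c\<in>Basis-{b}. g c *\<^sub>R c) + y *\<^sub>R b) + c ((\<Sum>c\<in>Basis-{b}. g c *\<^sub>R c) + y *\<^sub>R b) *\<^sub>R b) \<partial>lborel)
       = (\<integral>\<^sup>+y. f ((\<Sum>c\<in>Basis-{b}. g c *\<^sub>R c) + y *\<^sub>R b) \<partial>lborel)" unfolding x0_def .
  qed
  also have "\<dots> = (\<integral>\<^sup>+x. f x \<partial>lborel)"
    by (rule nn_integral_lines[OF _ b, symmetric]) measurable
  finally show ?thesis .
qed

lemma gauss1d: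
  assumes a: "a > 0"
  shows "(\<integral>\<^sup>+t. ennreal (exp (- (a * t\<^sup>2) / 2)) \<partial>lborel) = ennreal (sqrt (2 * pi / a))"
proof -
  define \<sigma> where "\<sigma> = 1 / sqrt a"
  have s: "\<sigma> > 0" "\<sigma>\<^sup>2 = 1 / a" using a by (auto simp: \<sigma>_def power_divide)
  have nd: "normal_density 0 \<sigma> t = sqrt (a / (2 * pi)) * exp (- (a * t\<^sup>2) / 2)" for t
    unfolding normal_density_def s using a by (simp add: real_sqrt_divide field_simps)
  have "1 = (\<integral>\<^sup>+t. ennreal (normal_density 0 \<sigma> t) \<partial>lborel)"
    by (subst nn_integral_eq_integral) (auto simp: integrable_normal_density[OF s(1)] integral_normal_density[OF s(1)])
  also have "\<dots> = ennreal (sqrt (a / (2 * pi))) * (\<integral>\<^sup>+t. ennreal (exp (- (a * t\<^sup>2) / 2)) \<partial>lborel)"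
    unfolding nd using a by (subst nn_integral_cmult[symmetric]) (auto intro!: nn_integral_cong simp: ennreal_mult)
  finally have e: "ennreal (sqrt (a / (2 * pi))) * (\<integral>\<^sup>+t. ennreal (exp (- (a * t\<^sup>2) / 2)) \<partial>lborel) = 1" ..
  have pos: "sqrt (a / (2 * pi)) > 0" using a by simp
  have "(\<integral>\<^sup>+t. ennreal (exp (- (a * t\<^sup>2) / 2)) \<partial>lborel) = ennreal (1 / sqrt (a / (2 * pi))) * (ennreal (sqrt (a / (2 * pi))) * (\<integral>\<^sup>+t. ennreal (exp (- (a * t\<^sup>2) / 2)) \<partial>lborel))"
    using pos a by (simp add: ennreal_mult[symmetric] mult.assoc[symmetric] del: ennreal_mult)
  also have "\<dots> = ennreal (sqrt (2 * pi / a))"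
    unfolding e using a by (simp add: real_sqrt_divide)
  finally show ?thesis .
qed

lemma axis_inner_mat: "axis i 1 \<bullet> (A *v axis j 1) = (A::real^'n::finite^'n) $ i $ j"
  by (simp add: matrix_vector_mult_basis inner_axis' column_def)

lemma qf_axis: "qf A (axis i 1) = A $ i $ i"
  unfolding qf_def by (rule axis_inner_mat)

lemma qf_add: "qf A (u + v) = qf A u + u \<bullet> (A *v v) + v \<bullet> (A *v u) + qf A v"
  unfolding qf_def by (simp add: matrix_vector_right_distrib inner_add_left inner_add_right)

lemma sym_entry: "transpose A = A \<Longrightarrow> A $ j $ i = (A::real^'n::finite^'n) $ i $ j"
  by (metis transpose_def vec_lambda_beta)

lemma polar:
  fixes A B :: "real^'n::finite^'n"
  assumes "transpose A = A" "transpose B = B" "\<And>x. qf A x = qf B x"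
  shows "A = B"
proof -
  have "A $ i $ j = B $ i $ j" for i j
  proof -
    have "qf A (axis i 1 + axis j 1) = A $ i $ i + 2 * A $ i $ j + A $ j $ j"
      unfolding qf_add qf_axis axis_inner_mat using sym_entry[OF assms(1), of i j] by simp
    moreover have "qf B (axis i 1 + axis j 1) = B $ i $ i + 2 * B $ i $ j + B $ j $ j"
      unfolding qf_add qf_axis axis_inner_mat using sym_entry[OF assms(2), of i j] by simp
    moreover have "A $ i $ i = B $ i $ i" "A $ j $ j = B $ j $ j"
      using assms(3)[of "axis i 1"] assms(3)[of "axis j 1"] by (auto simp: qf_axis)
    ultimately show ?thesis using assms(3)[of "axis i 1 + axis j 1"] by simp
  qed
  then show ?thesis by (simp add: vec_eq_iff)
qed

lemma qf_transform: "qf M (U *v x) = qf (transpose U ** M ** U) x"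
proof -
  have "qf M (U *v x) = (x v* transpose U) \<bullet> (M *v (U *v x))"
    unfolding qf_def by simp
  also have "\<dots> = x \<bullet> (transpose U *v (M *v (U *v x)))"
    by (rule dot_lmul_matrix)
  also have "\<dots> = qf (transpose U ** M ** U) x"
    unfolding qf_def by (simp add: matrix_vector_mul_assoc matrix_mul_assoc)
  finally show ?thesis .
qed

lemma sqrt_prod: "finite A \<Longrightarrow> sqrt (prod f A) = prod (\<lambda>i. sqrt (f i)) A"
  by (induct rule: finite_induct) (auto simp: real_sqrt_mult)

lemma prod_Basis_vec: "(\<Prod>b\<in>(Basis::(real^'n::finite) set). G b) = (\<Prod>i\<in>UNIV. G (axis i 1))"
  by (simp add: Basis_vec_def UNION_singleton_eq_range prod.reindex axis_eq_axis inj_on_def)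

lemma axis_Basis: "axis i 1 \<in> (Basis :: (real^'n::finite) set)"
  by (simp add: Basis_vec_def) blast

lemma gauss_diag:
  fixes M :: "real^'n::finite^'n"
  assumes d: "\<And>i j. i \<noteq> j \<Longrightarrow> M $ i $ j = 0" and p: "\<And>i. M $ i $ i > 0"
  shows "det M > 0 \<and> (\<integral>\<^sup>+x. ennreal (exp (- qf M x / 2)) \<partial>lborel) = ennreal (sqrt ((2 * pi) ^ CARD('n) / det M))"
proof -
  have dm: "det M = (\<Prod>i\<in>UNIV. M $ i $ i)" by (rule det_diagonal) (rule d)
  have dpos: "det M > 0" unfolding dm by (rule prod_pos) (use p less_imp_le in auto)
  have Mij: "M $ i $ j = (if i = j then M $ i $ i else 0)" for i j using d by auto
  have q: "qf M x = (\<Sum>i\<in>UNIV. M $ i $ i * (x $ i)\<^sup>2)" for x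
    unfolding qf_sum by (subst Mij) (simp add: if_distrib[of "\<lambda>y. _ * y"] power2_eq_square algebra_simps cong: if_cong)
  have e: "ennreal (exp (- qf M x / 2)) = (\<Prod>b\<in>Basis. ennreal (exp (- ((b \<bullet> (M *v b)) * (x \<bullet> b)\<^sup>2) / 2)))" for x
  proof -
    have "exp (- qf M x / 2) = (\<Prod>i\<in>UNIV. exp (- (M $ i $ i * (x $ i)\<^sup>2) / 2))"
      unfolding q by (simp add: exp_sum[symmetric] sum_negf sum_divide_distrib)
    then show ?thesis
      by (simp add: prod_ennreal prod_Basis_vec axis_inner_mat inner_axis)
  qed
  have "(\<integral>\<^sup>+x. ennreal (exp (- qf M x / 2)) \<partial>lborel) = (\<Prod>b\<in>Basis. (\<integral>\<^sup>+t. ennreal (exp (- ((b \<bullet> (M *v b)) * t\<^sup>2) / 2)) \<partial>lborel))"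
    unfolding e by (rule nn_integral_lborel_prod) auto
  also have "\<dots> = (\<Prod>i\<in>UNIV. ennreal (sqrt (2 * pi / M $ i $ i)))"
  proof -
    have g: "(\<integral>\<^sup>+t. ennreal (exp (- (M $ i $ i * t\<^sup>2 / 2))) \<partial>lborel) = ennreal (sqrt (2 * pi / M $ i $ i))" for i
      using gauss1d[OF p[of i]] by simp
    show ?thesis unfolding prod_Basis_vec axis_inner_mat by (simp add: g)
  qed
  also have "\<dots> = ennreal (sqrt ((2 * pi) ^ CARD('n) / det M))"
    unfolding dm using p
    by (simp add: prod_ennreal sqrt_prod[symmetric] prod_dividef less_imp_le)
  finally show ?thesis using dpos by simp
qed

definition ND :: "real^'n::finite^'n \<Rightarrow> 'n set" where
  "ND M = {i. \<exists>j. j \<noteq> i \<and> M $ i $ j \<noteq> 0}"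

lemma qf_split:
  fixes N :: "real^'n::finite^'n"
  shows "qf N z = z $ i0 * N $ i0 $ i0 * z $ i0 + (\<Sum>j\<in>UNIV-{i0}. z $ i0 * N $ i0 $ j * z $ j)
     + (\<Sum>i\<in>UNIV-{i0}. z $ i * N $ i $ i0 * z $ i0) + (\<Sum>i\<in>UNIV-{i0}. \<Sum>j\<in>UNIV-{i0}. z $ i * N $ i $ j * z $ j)"
  unfolding qf_sum
  by (simp add: sum.remove[of UNIV i0] sum.distrib algebra_simps)

lemma gauss_norm:
  fixes M :: "real^'n::finite^'n"
  assumes "transpose M = M" "\<And>v. v \<noteq> 0 \<Longrightarrow> qf M v > 0"
  shows "det M > 0 \<and> (\<integral>\<^sup>+x. ennreal (exp (- qf M x / 2)) \<partial>lborel) = ennreal (sqrt ((2 * pi) ^ CARD('n) / det M))"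
  using assms
proof (induction "card (ND M)" arbitrary: M rule: less_induct)
  case less
  note sym = less.prems(1) and pd = less.prems(2)
  show ?case
  proof (cases "ND M = {}")
    case True
    show ?thesis
    proof (rule gauss_diag)
      show "M $ i $ j = 0" if "i \<noteq> j" for i j using True that unfolding ND_def by (metis (mono_tags, lifting) empty_iff mem_Collect_eq)
      show "M $ i $ i > 0" for i using pd[of "axis i 1"] by (simp add: qf_axis axis_eq_0_iff)
    qed
  next
    case False
    then obtain i0 where i0: "i0 \<in> ND M" by auto
    define e where "e = (axis i0 1 :: real^'n)"
    define a where "a = M $ i0 $ i0"
    have a: "a > 0" using pd[of e] unfolding a_def e_def by (simp add: qf_axis axis_eq_0_iff)
    define R where "R = (UNIV::'n set) - {i0}"
    define cc where "cc j = (if j = i0 then 0 else M $ i0 $ j / a)" for j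
    define c where "c x = (\<Sum>j\<in>UNIV. cc j * x $ j)" for x :: "real^'n"
    define M' where "M' = ((\<chi> i. \<chi> j. if i = i0 \<and> j = i0 then a else if i = i0 \<or> j = i0 then 0
                                else M $ i $ j - M $ i $ i0 * M $ i0 $ j / a) :: real^'n^'n)"
    define Um where "Um = ((\<chi> i. \<chi> j. if i = i0 then (if j = i0 then 1 else cc j) else (if i = j then 1 else 0)) :: real^'n^'n)"
    have ecomp: "e $ k = (if k = i0 then 1 else 0)" for k unfolding e_def axis_def by simp
    have Ux: "Um *v x = x + c x *\<^sub>R e" for x
    proof -
      have "(Um *v x) $ k = (x + c x *\<^sub>R e) $ k" for k
      proof (cases "k = i0")
        case True
        have "(\<Sum>j\<in>UNIV. (if j = i0 then 1 else cc j) * x $ j) = (\<Sum>j\<in>UNIV. (if j = i0 then x $ j else 0) + cc j * x $ j)"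
          by (rule sum.cong) (auto simp: cc_def)
        then show ?thesis using True unfolding Um_def c_def matrix_vector_mult_def
          by (simp add: sum.distrib ecomp)
      next
        case False
        have "(Um *v x) $ k = (\<Sum>j\<in>UNIV. (if k = j then x $ j else 0))"
        proof -
          have h: "(if k = j then 1 else 0) * x $ j = (if k = j then x $ j else 0)" for j :: 'n by simp
          show ?thesis unfolding Um_def matrix_vector_mult_def using False by (simp add: h)
        qed
        also have "\<dots> = x $ k" by simp
        finally show ?thesis using False by (simp add: ecomp)
      qed
      then show ?thesis by (simp add: vec_eq_iff)
    qed
    have cinv: "c (x + t *\<^sub>R e) = c x" for x t
    proof -
      have h: "cc j * (x + t *\<^sub>R e) $ j = cc j * x $ j" for j
        by (simp add: ecomp cc_def)
      show ?thesis unfolding c_def by (rule sum.cong[OF refl]) (rule h)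
    qed
    define T where "T x = (\<Sum>j\<in>R. M $ i0 $ j * x $ j)" for x :: "real^'n"
    have cT: "c x = T x / a" for x
      unfolding c_def T_def R_def using a
      by (simp add: sum.remove[of UNIV i0] cc_def sum_divide_distrib)
    have Tsym: "(\<Sum>i\<in>R. x $ i * M $ i $ i0) = T x" for x
      unfolding T_def using sym_entry[OF sym] by (simp add: mult.commute)
    have qfeq: "qf M x = qf M' (x + c x *\<^sub>R e)" for x
    proof -
      let ?y = "x + c x *\<^sub>R e"
      have yR: "?y $ j = x $ j" if "j \<in> R" for j using that by (simp add: R_def ecomp)
      have y0: "?y $ i0 = x $ i0 + T x / a" by (simp add: ecomp cT)
      let ?Q = "(\<Sum>i\<in>R. \<Sum>j\<in>R. x $ i * M $ i $ j * x $ j)"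
      have h0: "qf M' ?y = (x $ i0 + T x / a) * a * (x $ i0 + T x / a)
          + (\<Sum>i\<in>R. \<Sum>j\<in>R. x $ i * (M $ i $ j - M $ i $ i0 * M $ i0 $ j / a) * x $ j)"
        unfolding qf_split[of M' _ i0] y0 R_def[symmetric]
        apply (simp add: M'_def R_def yR)
        apply (intro sum.cong refl)
        apply (simp add: ecomp)
        done
      have hs: "(\<Sum>i\<in>R. \<Sum>j\<in>R. x $ i * (M $ i $ j - M $ i $ i0 * M $ i0 $ j / a) * x $ j)
          = ?Q - (\<Sum>i\<in>R. x $ i * M $ i $ i0) * T x / a"
      proof -
        have "(\<Sum>i\<in>R. \<Sum>j\<in>R. x $ i * (M $ i $ j - M $ i $ i0 * M $ i0 $ j / a) * x $ j)
            = (\<Sum>i\<in>R. \<Sum>j\<in>R. x $ i * M $ i $ j * x $ j - (x $ i * M $ i $ i0) * (M $ i0 $ j * x $ j) / a)"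
          by (intro sum.cong refl) (simp add: algebra_simps)
        also have "\<dots> = ?Q - (\<Sum>i\<in>R. \<Sum>j\<in>R. (x $ i * M $ i $ i0) * (M $ i0 $ j * x $ j) / a)"
          by (simp add: sum_subtractf)
        also have "(\<Sum>i\<in>R. \<Sum>j\<in>R. (x $ i * M $ i $ i0) * (M $ i0 $ j * x $ j) / a) = (\<Sum>i\<in>R. x $ i * M $ i $ i0) * T x / a"
          unfolding T_def sum_product sum_divide_distrib ..
        finally show ?thesis .
      qed
      have h2: "qf M x = x $ i0 * a * x $ i0 + (\<Sum>j\<in>R. x $ i0 * M $ i0 $ j * x $ j) + (\<Sum>i\<in>R. x $ i * M $ i $ i0) * x $ i0 + ?Q"
        unfolding qf_split[of M _ i0] R_def[symmetric] a_def
        by (simp add: sum_distrib_right)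
      have h2': "(\<Sum>j\<in>R. x $ i0 * M $ i0 $ j * x $ j) = x $ i0 * T x"
        unfolding T_def by (simp add: sum_distrib_left mult.assoc)
      have h3: "a \<noteq> 0 \<Longrightarrow> (u + t / a) * a * (u + t / a) + (q - t * t / a) = u * a * u + u * t + t * u + (q::real)" for u t q
        by (simp add: field_simps)
      show ?thesis unfolding h0 hs h2 h2' Tsym using h3 a by simp
    qed
    have symM': "transpose M' = M'"
      unfolding M'_def using sym_entry[OF sym]
      by (auto simp: vec_eq_iff transpose_def mult.commute)
    have pdM': "qf M' v > 0" if "v \<noteq> 0" for v
    proof -
      define x where "x = v - c v *\<^sub>R e"
      have "c x = c v" unfolding x_def using cinv[of v "- c v"] by simp
      then have vx: "v = x + c x *\<^sub>R e" unfolding x_def by simp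
      have "x \<noteq> 0" using that vx by (auto simp: c_def)
      then have "qf M x > 0" by (rule pd)
      then show ?thesis using qfeq[of x] vx by simp
    qed
    have detU: "det Um = 1"
    proof -
      have "Um = (\<chi> k. if k = i0 then row i0 (mat 1) + (\<Sum>j\<in>R. cc j *s row j (mat 1)) else row k (mat 1))"
        unfolding Um_def R_def
        by (auto simp: vec_eq_iff row_def mat_def cc_def if_distrib[of "\<lambda>x. _ * x"] sum.delta cong: if_cong)
      also have "det \<dots> = det (mat 1 :: real^'n^'n)"
        apply (rule det_row_span)
        apply (rule vec.span_sum)
        apply (rule vec.span_scale)
        apply (rule vec.span_base)
        apply (auto simp: R_def)
        done
      finally show ?thesis by simp
    qed
    have Meq: "M = transpose Um ** M' ** Um"
    proof (rule polar)
      show "transpose M = M" by (rule sym)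
      show "transpose (transpose Um ** M' ** Um) = transpose Um ** M' ** Um"
        by (simp add: matrix_transpose_mul symM' matrix_mul_assoc)
      show "qf M x = qf (transpose Um ** M' ** Um) x" for x
        by (simp add: qf_transform[symmetric] Ux qfeq)
    qed
    have detM: "det M = det M'"
      by (subst Meq) (simp add: det_mul detU)
    have ND': "ND M' \<subseteq> ND M - {i0}"
    proof
      fix k assume k: "k \<in> ND M'"
      then obtain j where j: "j \<noteq> k" "M' $ k $ j \<noteq> 0" unfolding ND_def by auto
      have "k \<noteq> i0" using j unfolding M'_def by auto
      moreover have "j \<noteq> i0" using j \<open>k \<noteq> i0\<close> unfolding M'_def by auto
      ultimately have "M $ k $ j \<noteq> 0 \<or> M $ k $ i0 \<noteq> 0" using j unfolding M'_def by auto
      then have "k \<in> ND M" unfolding ND_def using j \<open>k \<noteq> i0\<close> by auto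
      then show "k \<in> ND M - {i0}" using \<open>k \<noteq> i0\<close> by auto
    qed
    have "card (ND M') < card (ND M)"
      by (rule psubset_card_mono) (use ND' i0 in auto)
    then have IH: "det M' > 0 \<and> (\<integral>\<^sup>+x. ennreal (exp (- qf M' x / 2)) \<partial>lborel) = ennreal (sqrt ((2 * pi) ^ CARD('n) / det M'))"
      using less.hyps symM' pdM' by blast
    have cm: "c \<in> borel_measurable borel" unfolding c_def
      by (rule borel_measurable_continuous_onI) (intro continuous_intros)
    have "(\<integral>\<^sup>+x. ennreal (exp (- qf M x / 2)) \<partial>lborel) = (\<integral>\<^sup>+x. ennreal (exp (- qf M' (x + c x *\<^sub>R e) / 2)) \<partial>lborel)"
      unfolding qfeq ..
    also have "\<dots> = (\<integral>\<^sup>+x. ennreal (exp (- qf M' x / 2)) \<partial>lborel)"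
      by (rule nn_shear[where f="\<lambda>x. ennreal (exp (- qf M' x / 2))", OF _ cm _ cinv])
         (auto simp: e_def axis_Basis)
    finally show ?thesis using IH detM by simp
  qed
qed

lemma spd_facts:
  fixes \<Sigma> :: "real^'n::finite^'n"
  assumes "sym_pos_def \<Sigma>"
  shows "matrix_inv \<Sigma> ** \<Sigma> = mat 1" "\<Sigma> ** matrix_inv \<Sigma> = mat 1"
    "transpose (matrix_inv \<Sigma>) = matrix_inv \<Sigma>"
    "\<And>v. v \<noteq> 0 \<Longrightarrow> qf (matrix_inv \<Sigma>) v > 0"
    "det \<Sigma> > 0" "det (matrix_inv \<Sigma>) = 1 / det \<Sigma>"
proof -
  have sym: "transpose \<Sigma> = \<Sigma>" and pd: "\<And>v. v \<noteq> 0 \<Longrightarrow> v \<bullet> (\<Sigma> *v v) > 0"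
    using assms unfolding sym_pos_def_def by auto
  have "\<forall>x. \<Sigma> *v x = 0 \<longrightarrow> x = 0" using pd by force
  then obtain B where "B ** \<Sigma> = mat 1" using matrix_left_invertible_ker by blast
  then have inv: "invertible \<Sigma>" using invertible_left_inverse by blast
  then have both: "\<Sigma> ** matrix_inv \<Sigma> = mat 1 \<and> matrix_inv \<Sigma> ** \<Sigma> = mat 1"
    unfolding matrix_inv_def invertible_def by (rule someI_ex)
  then show l: "matrix_inv \<Sigma> ** \<Sigma> = mat 1" and r: "\<Sigma> ** matrix_inv \<Sigma> = mat 1" by auto
  let ?S = "matrix_inv \<Sigma>"
  have "transpose ?S ** \<Sigma> = mat 1"
    by (metis matrix_transpose_mul r sym transpose_mat)
  then have "transpose ?S = transpose ?S ** (\<Sigma> ** ?S)" using r by simp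
  also have "\<dots> = ?S" using \<open>transpose ?S ** \<Sigma> = mat 1\<close> by (simp add: matrix_mul_assoc)
  finally show symS: "transpose ?S = ?S" .
  show "qf ?S v > 0" if "v \<noteq> 0" for v
  proof -
    define w where "w = ?S *v v"
    have vw: "\<Sigma> *v w = v" unfolding w_def by (simp add: matrix_vector_mul_assoc r)
    then have "w \<noteq> 0" using that by auto
    then have "w \<bullet> (\<Sigma> *v w) > 0" by (rule pd)
    then show ?thesis unfolding qf_def using vw w_def by (simp add: inner_commute)
  qed
  have "det \<Sigma> > 0" using gauss_norm[of \<Sigma>] sym pd unfolding qf_def by blast
  then show "det \<Sigma> > 0" .
  have "det ?S * det \<Sigma> = 1" using l det_mul[of ?S \<Sigma>] by simp
  then show "det ?S = 1 / det \<Sigma>" using \<open>det \<Sigma> > 0\<close> by (simp add: field_simps)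
qed

lemma gauss_density_qf:
  "gauss_density \<mu> \<Sigma> x = exp (- qf (matrix_inv \<Sigma>) (x - \<mu>) / 2) / sqrt ((2 * pi) ^ CARD('n) * det \<Sigma>)"
  for \<mu> :: "real^'n::finite"
  unfolding gauss_density_def qf_def by (rule refl)

lemma gauss_density_nonneg:
  assumes "sym_pos_def \<Sigma>" shows "gauss_density \<mu> \<Sigma> x \<ge> 0"
proof -
  have "det \<Sigma> > 0" by (rule spd_facts(5)[OF assms])
  then show ?thesis unfolding gauss_density_qf by (intro divide_nonneg_nonneg) auto
qed

lemma gauss_density_alt:
  "gauss_density \<mu> \<Sigma> x = exp (- qf (matrix_inv \<Sigma>) (x - \<mu>) * (1/2)) * inverse (sqrt ((2 * pi) ^ CARD('n) * det \<Sigma>))"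
  for \<mu> :: "real^'n::finite"
  unfolding gauss_density_qf divide_inverse by simp
lemma qf_cont': "continuous_on UNIV (\<lambda>x. qf M (x - \<mu>))"
  unfolding qf_sum by (intro continuous_intros)
lemma gauss_density_cont: "continuous_on UNIV (gauss_density \<mu> \<Sigma>)"
  unfolding gauss_density_alt[abs_def]
  by (intro continuous_on_mult[OF _ continuous_on_const] continuous_on_exp continuous_on_minus qf_cont')
lemma gauss_density_meas[measurable]: "gauss_density \<mu> \<Sigma> \<in> borel_measurable borel"
  unfolding gauss_density_qf[abs_def] by measurable
lemma nn_translate: "(\<integral>\<^sup>+x. f (x - \<mu>) \<partial>lborel) = (\<integral>\<^sup>+x. f x \<partial>lborel)"
  if [measurable]: "f \<in> borel_measurable borel" for \<mu> :: "real^'n::finite"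
proof -
  have "(\<integral>\<^sup>+x. f x \<partial>lborel) = (\<integral>\<^sup>+x. f x \<partial>distr lborel borel ((+) (- \<mu>)))"
    by (simp add: lborel_distr_plus)
  also have "\<dots> = (\<integral>\<^sup>+x. f (x - \<mu>) \<partial>lborel)"
    by (subst nn_integral_distr) auto
  finally show ?thesis ..
qed

lemma gauss_total:
  fixes \<Sigma> :: "real^'n::finite^'n"
  assumes "sym_pos_def \<Sigma>"
  shows "(\<integral>\<^sup>+x. ennreal (gauss_density \<mu> \<Sigma> x) \<partial>lborel) = 1"
proof -
  let ?S = "matrix_inv \<Sigma>"
  define Z where "Z = sqrt ((2 * pi) ^ CARD('n) * det \<Sigma>)"
  have dS: "det \<Sigma> > 0" using spd_facts[OF assms] by simp
  have Z: "Z > 0" using dS unfolding Z_def by simp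
  have N: "(\<integral>\<^sup>+x. ennreal (exp (- qf ?S x / 2)) \<partial>lborel) = ennreal (sqrt ((2 * pi) ^ CARD('n) / det ?S))"
    using gauss_norm[of ?S] spd_facts[OF assms] by blast
  have q: "(2 * pi) ^ CARD('n) / det ?S = (2 * pi) ^ CARD('n) * det \<Sigma>"
    using spd_facts(6)[OF assms] by simp
  have pt: "ennreal (gauss_density \<mu> \<Sigma> x) = ennreal (1 / Z) * ennreal (exp (- qf ?S (x - \<mu>) / 2))" for x
  proof -
    have "gauss_density \<mu> \<Sigma> x = (1 / Z) * exp (- qf ?S (x - \<mu>) / 2)"
      unfolding gauss_density_qf Z_def by simp
    then show ?thesis by (simp only:) (rule ennreal_mult, use Z in auto)
  qed
  have "(\<integral>\<^sup>+x. ennreal (gauss_density \<mu> \<Sigma> x) \<partial>lborel) = (\<integral>\<^sup>+x. ennreal (1 / Z) * ennreal (exp (- qf ?S (x - \<mu>) / 2)) \<partial>lborel)"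
    unfolding pt ..
  also have "\<dots> = ennreal (1 / Z) * (\<integral>\<^sup>+x. ennreal (exp (- qf ?S (x - \<mu>) / 2)) \<partial>lborel)"
    by (rule nn_integral_cmult) measurable
  also have "(\<integral>\<^sup>+x. ennreal (exp (- qf ?S (x - \<mu>) / 2)) \<partial>lborel) = (\<integral>\<^sup>+x. ennreal (exp (- qf ?S x / 2)) \<partial>lborel)"
    by (rule nn_translate[where f="\<lambda>x. ennreal (exp (- qf ?S x / 2))"]) measurable
  also have "\<dots> = ennreal Z" unfolding N q Z_def ..
  also have "ennreal (1 / Z) * ennreal Z = ennreal (1 / Z * Z)"
    by (rule ennreal_mult[symmetric]) (use Z in auto)
  also have "1 / Z * Z = 1" using Z by simp
  finally show ?thesis by simp
qed

lemma exp_ge_pow: "z \<ge> 0 \<Longrightarrow> z ^ m / fact m \<le> exp (z::real)"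
proof -
  assume z: "z \<ge> 0"
  have s: "(\<lambda>n. z ^ n /\<^sub>R fact n) sums exp z" by (rule exp_converges)
  have "sum (\<lambda>n. z ^ n /\<^sub>R fact n) {m} \<le> suminf (\<lambda>n. z ^ n /\<^sub>R fact n)"
    by (rule sum_le_suminf) (use s z in \<open>auto simp: sums_iff\<close>)
  then show ?thesis using s by (simp add: sums_iff divide_inverse mult.commute)
qed

lemma PB:
  fixes c B :: real
  assumes c: "c > 0" and B: "B \<ge> 0"
  shows "\<exists>C. \<forall>s\<ge>0. (B + s) ^ m \<le> C * exp (c * s\<^sup>2)"
proof -
  define C where "C = 2 ^ m * (B ^ m + 1 + fact m / c ^ m)"
  have "(B + s) ^ m \<le> C * exp (c * s\<^sup>2)" if s: "s \<ge> 0" for s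
  proof -
    have "(B + s) ^ m \<le> (2 * max B s) ^ m"
      by (rule power_mono) (use B s in auto)
    also have "\<dots> = 2 ^ m * max B s ^ m" by (simp add: power_mult_distrib)
    also have "max B s ^ m \<le> B ^ m + s ^ m"
      using B s by (auto simp: max_def)
    also have "s ^ m \<le> 1 + (c * s\<^sup>2) ^ m / c ^ m"
    proof (cases "s \<le> 1")
      case True
      then have "s ^ m \<le> 1" using s by (simp add: power_le_one)
      moreover have "(c * s\<^sup>2) ^ m / c ^ m \<ge> 0" using c s by simp
      ultimately show ?thesis by linarith
    next
      case False
      then have "s ^ m \<le> s ^ (2 * m)" by (intro power_increasing) auto
      also have "\<dots> = (c * s\<^sup>2) ^ m / c ^ m" using c by (simp add: power_mult_distrib power_mult)
      finally show ?thesis by simp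
    qed
    also have "(c * s\<^sup>2) ^ m / c ^ m \<le> fact m * exp (c * s\<^sup>2) / c ^ m"
    proof -
      have "(c * s\<^sup>2) ^ m / fact m \<le> exp (c * s\<^sup>2)" by (rule exp_ge_pow) (use c in simp)
      then have "(c * s\<^sup>2) ^ m \<le> fact m * exp (c * s\<^sup>2)" by (simp add: field_simps)
      then show ?thesis using c by (simp add: divide_right_mono)
    qed
    finally have "(B + s) ^ m \<le> 2 ^ m * (B ^ m + (1 + fact m * exp (c * s\<^sup>2) / c ^ m))"
      by simp
    also have "\<dots> \<le> C * exp (c * s\<^sup>2)"
    proof -
      have e1: "exp (c * s\<^sup>2) \<ge> 1" using c s by simp
      have b1: "B ^ m * 1 \<le> B ^ m * exp (c * s\<^sup>2)" by (rule mult_left_mono) (use e1 B in auto)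
      have b2: "(B ^ m + 1 + fact m / c ^ m) * exp (c * s\<^sup>2) = B ^ m * exp (c * s\<^sup>2) + exp (c * s\<^sup>2) + fact m * exp (c * s\<^sup>2) / c ^ m"
        by (simp add: algebra_simps)
      have "B ^ m + (1 + fact m * exp (c * s\<^sup>2) / c ^ m) \<le> (B ^ m + 1 + fact m / c ^ m) * exp (c * s\<^sup>2)"
        unfolding b2 using b1 e1 by linarith
      then show ?thesis unfolding C_def by (simp add: mult.assoc)
    qed
    finally show ?thesis .
  qed
  then show ?thesis by blast
qed

lemma exp_quad_lim_top:
  fixes c t :: real assumes c: "c > 0"
  shows "((\<lambda>y. exp (- c * (y - t)\<^sup>2)) \<longlongrightarrow> 0) at_top"
proof -
  have l1: "filterlim (\<lambda>y. c * y - c * t - c / 4) at_top at_top"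
    unfolding filterlim_at_top eventually_at_top_linorder
  proof
    fix Z
    show "\<exists>N. \<forall>y\<ge>N. Z \<le> c * y - c * t - c / 4"
    proof (rule exI[of _ "(Z + c * t + c / 4) / c"], intro allI impI)
      fix y assume "(Z + c * t + c / 4) / c \<le> y"
      then have "Z + c * t + c / 4 \<le> c * y" using c by (simp add: pos_divide_le_eq mult.commute)
      then show "Z \<le> c * y - c * t - c / 4" by simp
    qed
  qed
  have l2: "filterlim (\<lambda>y. c * (y - t)\<^sup>2) at_top at_top"
  proof (rule filterlim_at_top_mono[OF l1])
    show "\<forall>\<^sub>F y in at_top. c * y - c * t - c / 4 \<le> c * (y - t)\<^sup>2"
    proof (intro always_eventually allI)
      fix y
      have h: "((y - t) - 1/2)\<^sup>2 = (y - t)\<^sup>2 - (y - t) + 1/4" by (simp add: power2_eq_square algebra_simps)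
      have "(y - t) - 1 / 4 \<le> (y - t)\<^sup>2" using zero_le_power2[of "(y - t) - 1/2"] h by linarith
      then have "c * ((y - t) - 1/4) \<le> c * (y - t)\<^sup>2" using c by (intro mult_left_mono) auto
      then show "c * y - c * t - c / 4 \<le> c * (y - t)\<^sup>2" by (simp add: algebra_simps)
    qed
  qed
  have l3: "filterlim (\<lambda>y. - c * (y - t)\<^sup>2) at_bot at_top"
    using l2 by (simp add: filterlim_uminus_at_top)
  show ?thesis by (rule filterlim_compose[OF exp_at_bot l3])
qed

lemma exp_quad_lim_bot:
  fixes c t :: real assumes c: "c > 0"
  shows "((\<lambda>y. exp (- c * (y - t)\<^sup>2)) \<longlongrightarrow> 0) at_bot"
proof -
  have "((\<lambda>y. exp (- c * (y - (- t))\<^sup>2)) \<longlongrightarrow> 0) at_top" by (rule exp_quad_lim_top[OF c])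
  then have "((\<lambda>y. exp (- c * ((- y) - t)\<^sup>2)) \<longlongrightarrow> 0) at_top"
    by (simp add: power2_commute add.commute)
  then show ?thesis by (simp add: filterlim_at_bot_mirror)
qed

lemma qf_scale: "qf M (c *\<^sub>R v) = c\<^sup>2 * qf M v"
  unfolding qf_def by (simp add: matrix_vector_mult_scaleR power2_eq_square)

lemma qf_lower:
  fixes M :: "real^'n::finite^'n"
  assumes pd: "\<And>v. v \<noteq> 0 \<Longrightarrow> qf M v > 0"
  shows "\<exists>l>0. \<forall>v. qf M v \<ge> l * (norm v)\<^sup>2"
proof -
  have "(axis undefined 1 :: real^'n) \<in> sphere 0 1" by (simp add: sphere_def dist_norm)
  then have ne: "sphere (0::real^'n) 1 \<noteq> {}" by blast
  obtain u where u: "u \<in> sphere 0 1" and umin: "\<And>w. w \<in> sphere 0 1 \<Longrightarrow> qf M u \<le> qf M w"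
    using continuous_attains_inf[OF compact_sphere ne, of "qf M"]
      continuous_on_subset[OF qf_cont] by blast
  have "u \<noteq> 0" using u by auto
  then have l: "qf M u > 0" by (rule pd)
  have "qf M v \<ge> qf M u * (norm v)\<^sup>2" for v
  proof (cases "v = 0")
    case True then show ?thesis by (simp add: qf_def)
  next
    case False
    define w where "w = (1 / norm v) *\<^sub>R v"
    have w: "w \<in> sphere 0 1" using False by (simp add: w_def)
    have vw: "v = norm v *\<^sub>R w" using False by (simp add: w_def)
    have "qf M v = (norm v)\<^sup>2 * qf M w" by (subst vw) (simp add: qf_scale)
    then show ?thesis using mult_right_mono[OF umin[OF w], of "(norm v)\<^sup>2"] by (simp add: mult.commute)
  qed
  then show ?thesis using l by blast
qed

lemma mono_bound: "\<bar>monomial \<beta> x\<bar> \<le> (1 + norm x) ^ mi_order \<beta>"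
proof -
  have "\<bar>monomial \<beta> x\<bar> = (\<Prod>i\<in>UNIV. \<bar>x $ i\<bar> ^ \<beta> i)"
    unfolding monomial_def by (simp add: abs_prod power_abs)
  also have "\<dots> \<le> (\<Prod>i\<in>UNIV. (1 + norm x) ^ \<beta> i)"
    by (intro prod_mono conjI power_mono) (auto intro: order_trans[OF component_le_norm_cart])
  also have "\<dots> = (1 + norm x) ^ mi_order \<beta>"
    unfolding mi_order_def power_sum ..
  finally show ?thesis .
qed

lemma gauss_ub:
  fixes \<Sigma> :: "real^'n::finite^'n"
  assumes "sym_pos_def \<Sigma>"
  shows "\<exists>l>0. \<exists>K. \<forall>x. gauss_density \<mu> \<Sigma> x \<le> K * exp (- l * (norm (x - \<mu>))\<^sup>2 / 2)"
proof -
  obtain l where l: "l > 0" "\<And>v. qf (matrix_inv \<Sigma>) v \<ge> l * (norm v)\<^sup>2"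
    using qf_lower[OF spd_facts(4)[OF assms]] by blast
  define Z where "Z = sqrt ((2 * pi) ^ CARD('n) * det \<Sigma>)"
  have Z: "Z > 0" using spd_facts(5)[OF assms] unfolding Z_def by simp
  have "gauss_density \<mu> \<Sigma> x \<le> (1 / Z) * exp (- l * (norm (x - \<mu>))\<^sup>2 / 2)" for x
  proof -
    have "exp (- qf (matrix_inv \<Sigma>) (x - \<mu>) / 2) \<le> exp (- l * (norm (x - \<mu>))\<^sup>2 / 2)"
      using l(2)[of "x - \<mu>"] by simp
    then show ?thesis unfolding gauss_density_qf Z_def[symmetric] using Z
      by (simp add: divide_right_mono)
  qed
  then show ?thesis using l by blast
qed

lemma gbound:
  fixes \<Sigma> :: "real^'n::finite^'n"
  assumes "sym_pos_def \<Sigma>" and q: "\<And>x. \<bar>q x\<bar> \<le> D * (1 + norm x) ^ m"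
  shows "\<exists>C c. c > 0 \<and> (\<forall>x. \<bar>q x * gauss_density \<mu> \<Sigma> x\<bar> \<le> C * exp (- c * (norm (x - \<mu>))\<^sup>2))"
proof -
  obtain l K where l: "l > 0" and K: "\<And>x. gauss_density \<mu> \<Sigma> x \<le> K * exp (- l * (norm (x - \<mu>))\<^sup>2 / 2)"
    using gauss_ub[OF assms(1), of \<mu>] by blast
  have D: "D \<ge> 0" using q[of 0] by simp
  obtain C0 where C0: "\<And>s. s \<ge> 0 \<Longrightarrow> (1 + norm \<mu> + s) ^ m \<le> C0 * exp (l / 4 * s\<^sup>2)"
    using PB[of "l/4" "1 + norm \<mu>" m] l by auto
  have C0p: "C0 \<ge> 0"
  proof -
    have a: "0 \<le> (1 + norm \<mu>) ^ m" by simp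
    have b: "(1 + norm \<mu>) ^ m \<le> C0" using C0[of 0] by simp
    show ?thesis using a b by linarith
  qed
  have "\<bar>q x * gauss_density \<mu> \<Sigma> x\<bar> \<le> (D * C0 * K) * exp (- (l / 4) * (norm (x - \<mu>))\<^sup>2)" for x
  proof -
    let ?s = "norm (x - \<mu>)"
    have pn: "gauss_density \<mu> \<Sigma> x \<ge> 0" by (rule gauss_density_nonneg[OF assms(1)])
    have "1 + norm x \<le> 1 + norm \<mu> + ?s" using norm_triangle_sub[of x \<mu>] by simp
    then have "(1 + norm x) ^ m \<le> (1 + norm \<mu> + ?s) ^ m" by (intro power_mono) auto
    also have "\<dots> \<le> C0 * exp (l / 4 * ?s\<^sup>2)" by (rule C0) simp
    finally have qb: "\<bar>q x\<bar> \<le> D * (C0 * exp (l / 4 * ?s\<^sup>2))"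
      using q[of x] D by (meson mult_left_mono order_trans)
    have "\<bar>q x * gauss_density \<mu> \<Sigma> x\<bar> = \<bar>q x\<bar> * gauss_density \<mu> \<Sigma> x" using pn by (simp add: abs_mult)
    also have "\<dots> \<le> D * (C0 * exp (l / 4 * ?s\<^sup>2)) * (K * exp (- l * ?s\<^sup>2 / 2))"
      by (intro mult_mono qb K) (use pn D C0p in auto)
    also have "\<dots> = (D * C0 * K) * (exp (l / 4 * ?s\<^sup>2) * exp (- l * ?s\<^sup>2 / 2))" by simp
    also have "exp (l / 4 * ?s\<^sup>2) * exp (- l * ?s\<^sup>2 / 2) = exp (- (l / 4) * ?s\<^sup>2)"
      by (simp add: exp_add[symmetric] field_simps)
    finally show ?thesis .
  qed
  then show ?thesis using l by (intro exI[of _ "D * C0 * K"] exI[of _ "l / 4"]) auto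
qed

lemma qf_mat: "qf (mat k) x = k * (norm x)\<^sup>2"
proof -
  have h: "x $ i * (\<chi> i j. if i = j then k else 0) $ i $ j * x $ j = (if j = i then k * (x $ i * x $ i) else 0)" for i j
    by auto
  have "qf (mat k) x = (\<Sum>i\<in>UNIV. k * (x $ i * x $ i))"
    unfolding qf_sum mat_def h by simp
  also have "\<dots> = k * (x \<bullet> x)" by (simp add: inner_vec_def sum_distrib_left)
  finally show ?thesis by (simp add: power2_norm_eq_inner)
qed

lemma integrable_gauss_dom:
  fixes f :: "real^'n::finite \<Rightarrow> real"
  assumes fm: "f \<in> borel_measurable borel" and c: "c > 0"
    and b: "\<And>x. \<bar>f x\<bar> \<le> C * exp (- c * (norm (x - \<mu>))\<^sup>2)"
  shows "integrable lborel f"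
proof -
  have Nd: "(\<integral>\<^sup>+x. ennreal (exp (- qf (mat (2 * c) :: real^'n^'n) x / 2)) \<partial>lborel) = ennreal (sqrt ((2 * pi) ^ CARD('n) / det (mat (2 * c) :: real^'n^'n)))"
  proof -
    have p1: "(mat (2 * c) :: real^'n^'n) $ i $ j = 0" if "i \<noteq> j" for i j using that by (simp add: mat_def)
    have p2: "(mat (2 * c) :: real^'n^'n) $ i $ i > 0" for i using c by (simp add: mat_def)
    have "det (mat (2 * c) :: real^'n^'n) > 0 \<and> (\<integral>\<^sup>+x. ennreal (exp (- qf (mat (2 * c) :: real^'n^'n) x / 2)) \<partial>lborel) = ennreal (sqrt ((2 * pi) ^ CARD('n) / det (mat (2 * c) :: real^'n^'n)))"
      by (rule gauss_diag) (use p1 p2 in auto)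
    then show ?thesis by (rule conjunct2)
  qed
  have e: "exp (- qf (mat (2 * c)) x / 2) = exp (- c * (norm x)\<^sup>2)" for x :: "real^'n"
    unfolding qf_mat by simp
  have "(\<integral>\<^sup>+x. ennreal (exp (- c * (norm (x - \<mu>))\<^sup>2)) \<partial>lborel) = (\<integral>\<^sup>+x. ennreal (exp (- c * (norm (x::real^'n))\<^sup>2)) \<partial>lborel)"
    using nn_translate[of "\<lambda>x. ennreal (exp (- c * (norm x)\<^sup>2))" \<mu>] by simp
  also have "\<dots> < \<infinity>" using Nd unfolding e by simp
  finally have fin: "(\<integral>\<^sup>+x. ennreal (exp (- c * (norm (x - \<mu>))\<^sup>2)) \<partial>lborel) < \<infinity>" .
  have ig: "integrable lborel (\<lambda>x. exp (- c * (norm (x - \<mu>))\<^sup>2))"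
    by (rule integrableI_nonneg) (use fin in auto)
  show ?thesis
  proof (rule Bochner_Integration.integrable_bound[OF Bochner_Integration.integrable_mult_right[OF ig, of C]])
    show "f \<in> borel_measurable lborel" using fm by simp
    show "AE x in lborel. norm (f x) \<le> norm (C * exp (- c * (norm (x - \<mu>))\<^sup>2))"
      using b by (auto intro!: AE_I2 order_trans[OF b] simp: abs_mult)
  qed
qed

lemma ftc_zero:
  fixes F f :: "real \<Rightarrow> real"
  assumes d: "\<And>y. (F has_real_derivative f y) (at y)" and c: "continuous_on UNIV f"
    and i: "integrable lborel f" and t: "(F \<longlongrightarrow> 0) at_top" and b: "(F \<longlongrightarrow> 0) at_bot"
  shows "(\<integral>y. f y \<partial>lborel) = 0"
proof -
  have "(LBINT y=-\<infinity>..\<infinity>. f y) = 0 - 0"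
  proof (rule interval_integral_FTC_integrable[where F=F])
    show "(F has_vector_derivative f x) (at x)" for x
      using d[of x] by (simp add: has_real_derivative_iff_has_vector_derivative)
    show "isCont f x" for x using c by (simp add: continuous_on_eq_continuous_at)
    show "set_integrable lborel (einterval (-\<infinity>) \<infinity>) f"
      using i by (simp add: einterval_eq_UNIV set_integrable_def)
    show "((F \<circ> real_of_ereal) \<longlongrightarrow> 0) (at_right (-\<infinity>))" using b by (simp add: ereal_tendsto_simps1)
    show "((F \<circ> real_of_ereal) \<longlongrightarrow> 0) (at_left \<infinity>)" using t by (simp add: ereal_tendsto_simps1)
  qed simp
  then show ?thesis
    by (simp add: interval_lebesgue_integral_def einterval_eq_UNIV set_lebesgue_integral_def)
qed

lemma line_bound:
  fixes f :: "real^'n::finite \<Rightarrow> real"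
  assumes b: "\<And>x. \<bar>f x\<bar> \<le> C * exp (- c * (norm (x - \<mu>))\<^sup>2)" and c: "c > 0"
  shows "\<bar>f (x0 + y *\<^sub>R axis i 1)\<bar> \<le> C * exp (- c * (y - (\<mu> $ i - x0 $ i))\<^sup>2)"
proof -
  let ?x = "x0 + y *\<^sub>R axis i 1"
  have "0 \<le> C * exp (- c * (norm (0 - \<mu>))\<^sup>2)" using b[of 0] by (meson abs_ge_zero order_trans)
  then have C: "C \<ge> 0" by (simp add: zero_le_mult_iff)
  have comp: "(?x - \<mu>) $ i = y - (\<mu> $ i - x0 $ i)" by (simp add: axis_def)
  have "\<bar>y - (\<mu> $ i - x0 $ i)\<bar> \<le> norm (?x - \<mu>)" using component_le_norm_cart[of "?x - \<mu>" i] comp by simp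
  then have "(y - (\<mu> $ i - x0 $ i))\<^sup>2 \<le> (norm (?x - \<mu>))\<^sup>2"
    by (metis abs_le_square_iff abs_norm_cancel)
  then have "exp (- c * (norm (?x - \<mu>))\<^sup>2) \<le> exp (- c * (y - (\<mu> $ i - x0 $ i))\<^sup>2)"
    using c by simp
  then show ?thesis using b[of ?x] C by (meson mult_left_mono order_trans)
qed

lemma integrable_exp_quad:
  fixes c t :: real assumes c: "c > 0"
  shows "integrable lborel (\<lambda>y. exp (- c * (y - t)\<^sup>2))"
proof -
  define \<sigma> where "\<sigma> = 1 / sqrt (2 * c)"
  have s: "\<sigma> > 0" "2 * \<sigma>\<^sup>2 = 1 / c" using c by (auto simp: \<sigma>_def power_divide)
  have e: "exp (- c * (y - t)\<^sup>2) = sqrt (2 * pi * \<sigma>\<^sup>2) * normal_density t \<sigma> y" for y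
  proof -
    have "(y - t)\<^sup>2 / (2 * \<sigma>\<^sup>2) = c * (y - t)\<^sup>2" using s c by simp
    then show ?thesis unfolding normal_density_def using s by simp
  qed
  show ?thesis unfolding e
    by (rule Bochner_Integration.integrable_mult_right) (rule integrable_normal_density[OF s(1)])
qed

lemma line_integrable:
  fixes f :: "real^'n::finite \<Rightarrow> real"
  assumes fm[measurable]: "f \<in> borel_measurable borel"
    and b: "\<And>x. \<bar>f x\<bar> \<le> C * exp (- c * (norm (x - \<mu>))\<^sup>2)" and c: "c > 0"
  shows "integrable lborel (\<lambda>y. f (x0 + y *\<^sub>R axis i 1))"
proof (rule Bochner_Integration.integrable_bound[OF Bochner_Integration.integrable_mult_right[OF integrable_exp_quad[OF c, of "\<mu> $ i - x0 $ i"], of C]])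
  show "(\<lambda>y. f (x0 + y *\<^sub>R axis i 1)) \<in> borel_measurable lborel" by measurable
  show "AE y in lborel. norm (f (x0 + y *\<^sub>R axis i 1)) \<le> norm (C * exp (- c * (y - (\<mu> $ i - x0 $ i))\<^sup>2))"
    using line_bound[OF b c, of x0 _ i] by (auto intro!: AE_I2 order_trans[OF _ abs_ge_self])
qed

lemma line_lim:
  fixes f :: "real^'n::finite \<Rightarrow> real"
  assumes b: "\<And>x. \<bar>f x\<bar> \<le> C * exp (- c * (norm (x - \<mu>))\<^sup>2)" and c: "c > 0"
  shows "((\<lambda>y. f (x0 + y *\<^sub>R axis i 1)) \<longlongrightarrow> 0) at_top" "((\<lambda>y. f (x0 + y *\<^sub>R axis i 1)) \<longlongrightarrow> 0) at_bot"
proof -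
  have lt: "((\<lambda>y. C * exp (- c * (y - (\<mu> $ i - x0 $ i))\<^sup>2)) \<longlongrightarrow> 0) at_top"
    using tendsto_mult_left[OF exp_quad_lim_top[OF c], of C] by simp
  have lb: "((\<lambda>y. C * exp (- c * (y - (\<mu> $ i - x0 $ i))\<^sup>2)) \<longlongrightarrow> 0) at_bot"
    using tendsto_mult_left[OF exp_quad_lim_bot[OF c], of C] by simp
  show "((\<lambda>y. f (x0 + y *\<^sub>R axis i 1)) \<longlongrightarrow> 0) at_top"
    by (rule Lim_null_comparison[OF _ lt]) (use line_bound[OF b c] in auto)
  show "((\<lambda>y. f (x0 + y *\<^sub>R axis i 1)) \<longlongrightarrow> 0) at_bot"
    by (rule Lim_null_comparison[OF _ lb]) (use line_bound[OF b c] in auto)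
qed

lemma qf_line_deriv:
  fixes S :: "real^'n::finite^'n"
  assumes sym: "transpose S = S"
  shows "((\<lambda>y. qf S (v + y *\<^sub>R axis i 1)) has_real_derivative 2 * (S *v (v + y *\<^sub>R axis i 1)) $ i) (at y)"
proof -
  let ?e = "axis i 1 :: real^'n"
  have s1: "v \<bullet> (S *v ?e) = (S *v v) $ i"
  proof -
    have "v \<bullet> (S *v ?e) = (v v* S) \<bullet> ?e" by (simp add: dot_lmul_matrix)
    also have "v v* S = S *v v" using vector_transpose_matrix[of v S] sym by simp
    finally show ?thesis by (simp add: inner_axis)
  qed
  have e: "qf S (v + y *\<^sub>R ?e) = qf S v + 2 * y * (S *v v) $ i + y\<^sup>2 * S $ i $ i" for y
    unfolding qf_add qf_scale qf_axis
    by (simp add: matrix_vector_mult_scaleR s1 inner_axis' power2_eq_square algebra_simps)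
  have c: "(S *v (v + y *\<^sub>R ?e)) $ i = (S *v v) $ i + y * S $ i $ i"
    by (simp add: matrix_vector_right_distrib matrix_vector_mult_scaleR matrix_vector_mult_basis column_def)
  show ?thesis unfolding e c
    by (auto intro!: derivative_eq_intros simp: power2_eq_square algebra_simps)
qed

lemma gauss_line_deriv:
  fixes \<Sigma> :: "real^'n::finite^'n"
  assumes spd: "sym_pos_def \<Sigma>"
  shows "((\<lambda>y. gauss_density \<mu> \<Sigma> (x0 + y *\<^sub>R axis i 1)) has_real_derivative
     (- (matrix_inv \<Sigma> *v (x0 + y *\<^sub>R axis i 1 - \<mu>)) $ i * gauss_density \<mu> \<Sigma> (x0 + y *\<^sub>R axis i 1))) (at y)"
proof -
  let ?S = "matrix_inv \<Sigma>"
  let ?K = "inverse (sqrt ((2 * pi) ^ CARD('n) * det \<Sigma>))"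
  have r: "x0 + y *\<^sub>R axis i 1 - \<mu> = (x0 - \<mu>) + y *\<^sub>R axis i 1" for y by (simp add: algebra_simps)
  have q: "((\<lambda>y. qf ?S ((x0 - \<mu>) + y *\<^sub>R axis i 1)) has_real_derivative 2 * (?S *v ((x0 - \<mu>) + y *\<^sub>R axis i 1)) $ i) (at y)"
    by (rule qf_line_deriv[OF spd_facts(3)[OF spd]])
  have "((\<lambda>y. exp (- qf ?S ((x0 - \<mu>) + y *\<^sub>R axis i 1) * (1/2)) * ?K) has_real_derivative
      (exp (- qf ?S ((x0 - \<mu>) + y *\<^sub>R axis i 1) * (1/2)) * (- (2 * (?S *v ((x0 - \<mu>) + y *\<^sub>R axis i 1)) $ i) * (1/2))) * ?K) (at y)"
    by (intro DERIV_cmult_right DERIV_chain2[OF DERIV_exp] DERIV_cmult_right DERIV_minus q)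
  then show ?thesis unfolding gauss_density_alt r by (simp add: algebra_simps)
qed

lemma mono_cont: "continuous_on UNIV (monomial \<beta> :: real^'n::finite \<Rightarrow> real)"
  unfolding monomial_def[abs_def] by (intro continuous_intros)

lemma mono_meas[measurable]: "monomial \<beta> \<in> borel_measurable (borel :: (real^'n::finite) measure)"
  by (rule borel_measurable_continuous_onI[OF mono_cont])

lemma mv_comp_cont: "continuous_on UNIV (\<lambda>x. (S *v (x - \<mu>)) $ i :: real)"
  for S :: "real^'n::finite^'n"
  unfolding matrix_vector_mult_def by (simp, intro continuous_intros)

definition qS :: "real^'n::finite \<Rightarrow> real^'n^'n \<Rightarrow> ('n \<Rightarrow> nat) \<Rightarrow> 'n \<Rightarrow> real^'n \<Rightarrow> real" where
  "qS \<mu> \<Sigma> \<beta> i x = real (\<beta> i) * monomial (decr \<beta> i) x - monomial \<beta> x * (matrix_inv \<Sigma> *v (x - \<mu>)) $ i"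

lemma qS_cont: "continuous_on UNIV (qS \<mu> \<Sigma> \<beta> i)"
  unfolding qS_def[abs_def] by (intro continuous_intros mono_cont mv_comp_cont)

lemma qS_bound: "\<exists>D. \<forall>x. \<bar>qS \<mu> \<Sigma> \<beta> i x\<bar> \<le> D * (1 + norm x) ^ (mi_order \<beta> + 1)"
proof -
  obtain K where K: "\<And>v. norm (matrix_inv \<Sigma> *v v) \<le> norm v * K" "K > 0"
    using bounded_linear.pos_bounded[OF matrix_vector_mul_bounded_linear[of "matrix_inv \<Sigma>"]] by blast
  define D where "D = real (\<beta> i) + K * (1 + norm \<mu>)"
  have "\<bar>qS \<mu> \<Sigma> \<beta> i x\<bar> \<le> D * (1 + norm x) ^ (mi_order \<beta> + 1)" for x
  proof -
    let ?N = "mi_order \<beta> + 1"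
    have x1: "1 \<le> 1 + norm x" by simp
    have a: "\<bar>monomial (decr \<beta> i) x\<bar> \<le> (1 + norm x) ^ ?N"
      using mono_bound[of "decr \<beta> i" x] power_increasing[OF _ x1, of "mi_order (decr \<beta> i)" ?N]
        mo_le[of "\<beta> i - 1" \<beta> i] by simp
    have "\<bar>(matrix_inv \<Sigma> *v (x - \<mu>)) $ i\<bar> \<le> norm (x - \<mu>) * K"
      using component_le_norm_cart[of "matrix_inv \<Sigma> *v (x - \<mu>)" i] K(1)[of "x - \<mu>"] by simp
    also have "\<dots> \<le> (norm x + norm \<mu>) * K" using K(2) norm_triangle_ineq4[of x \<mu>] by (simp add: mult_right_mono)
    also have "\<dots> \<le> K * (1 + norm \<mu>) * (1 + norm x)" using K(2) by (simp add: algebra_simps)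
    finally have b: "\<bar>(matrix_inv \<Sigma> *v (x - \<mu>)) $ i\<bar> \<le> K * (1 + norm \<mu>) * (1 + norm x)" .
    have "\<bar>monomial \<beta> x * (matrix_inv \<Sigma> *v (x - \<mu>)) $ i\<bar> \<le> (1 + norm x) ^ mi_order \<beta> * (K * (1 + norm \<mu>) * (1 + norm x))"
      unfolding abs_mult by (intro mult_mono mono_bound b) auto
    also have "\<dots> = K * (1 + norm \<mu>) * (1 + norm x) ^ ?N" by (simp add: algebra_simps)
    finally have c: "\<bar>monomial \<beta> x * (matrix_inv \<Sigma> *v (x - \<mu>)) $ i\<bar> \<le> K * (1 + norm \<mu>) * (1 + norm x) ^ ?N" .
    have "\<bar>qS \<mu> \<Sigma> \<beta> i x\<bar> \<le> real (\<beta> i) * \<bar>monomial (decr \<beta> i) x\<bar> + \<bar>monomial \<beta> x * (matrix_inv \<Sigma> *v (x - \<mu>)) $ i\<bar>"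
      unfolding qS_def by (simp add: abs_mult order_trans[OF abs_triangle_ineq4])
    also have "\<dots> \<le> real (\<beta> i) * (1 + norm x) ^ ?N + K * (1 + norm \<mu>) * (1 + norm x) ^ ?N"
      by (intro add_mono mult_left_mono a c) auto
    also have "\<dots> = D * (1 + norm x) ^ ?N" unfolding D_def by (simp add: algebra_simps)
    finally show ?thesis .
  qed
  then show ?thesis by blast
qed

lemma qS_integrable:
  fixes \<Sigma> :: "real^'n::finite^'n"
  assumes spd: "sym_pos_def \<Sigma>"
  shows "integrable lborel (\<lambda>x. qS \<mu> \<Sigma> \<beta> i x * gauss_density \<mu> \<Sigma> x)"
proof -
  obtain D where D: "\<And>x. \<bar>qS \<mu> \<Sigma> \<beta> i x\<bar> \<le> D * (1 + norm x) ^ (mi_order \<beta> + 1)" using qS_bound by blast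
  obtain C c where c: "c > 0" and b: "\<And>x. \<bar>qS \<mu> \<Sigma> \<beta> i x * gauss_density \<mu> \<Sigma> x\<bar> \<le> C * exp (- c * (norm (x - \<mu>))\<^sup>2)"
    using gbound[OF spd D] by blast
  have m: "(\<lambda>x. qS \<mu> \<Sigma> \<beta> i x * gauss_density \<mu> \<Sigma> x) \<in> borel_measurable borel"
    using borel_measurable_continuous_onI[OF qS_cont] by measurable
  show ?thesis by (rule integrable_gauss_dom[OF m c b])
qed

lemma stein_gauss:
  fixes \<Sigma> :: "real^'n::finite^'n"
  assumes spd: "sym_pos_def \<Sigma>"
  shows "(\<integral>x. qS \<mu> \<Sigma> \<beta> i x * gauss_density \<mu> \<Sigma> x \<partial>lborel) = 0"
proof (rule integral_zero_by_lines[OF qS_integrable[OF spd] axis_Basis])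
  fix x0 :: "real^'n"
  let ?e = "axis i 1 :: real^'n"
  let ?p = "gauss_density \<mu> \<Sigma>"
  let ?G = "\<lambda>x. qS \<mu> \<Sigma> \<beta> i x * ?p x"
  let ?H = "\<lambda>x. monomial \<beta> x * ?p x"
  obtain D where D: "\<And>x. \<bar>qS \<mu> \<Sigma> \<beta> i x\<bar> \<le> D * (1 + norm x) ^ (mi_order \<beta> + 1)" using qS_bound by blast
  obtain C c where c: "c > 0" and b: "\<And>x. \<bar>?G x\<bar> \<le> C * exp (- c * (norm (x - \<mu>))\<^sup>2)"
    using gbound[OF spd D] by blast
  obtain C' c' where c': "c' > 0" and b': "\<And>x. \<bar>?H x\<bar> \<le> C' * exp (- c' * (norm (x - \<mu>))\<^sup>2)"
  proof -
    have mb: "\<And>x. \<bar>monomial \<beta> x\<bar> \<le> 1 * (1 + norm x) ^ mi_order \<beta>" using mono_bound by simp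
    show ?thesis using gbound[OF spd mb, where \<mu>=\<mu>] that by blast
  qed
  have Gm: "?G \<in> borel_measurable borel"
    using borel_measurable_continuous_onI[OF qS_cont] by measurable
  have Gc: "continuous_on UNIV ?G" by (intro continuous_intros qS_cont gauss_density_cont)
  show "(\<integral>y. ?G (x0 + y *\<^sub>R ?e) \<partial>lborel) = 0"
  proof (rule ftc_zero[where F="\<lambda>y. ?H (x0 + y *\<^sub>R ?e)"])
    show "((\<lambda>y. ?H (x0 + y *\<^sub>R ?e)) has_real_derivative ?G (x0 + y *\<^sub>R ?e)) (at y)" for y
    proof -
      have "((\<lambda>y. monomial \<beta> (x0 + y *\<^sub>R ?e) * ?p (x0 + y *\<^sub>R ?e)) has_real_derivative
         (real (\<beta> i) * monomial (decr \<beta> i) (x0 + y *\<^sub>R ?e)) * ?p (x0 + y *\<^sub>R ?e)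
         + (- (matrix_inv \<Sigma> *v (x0 + y *\<^sub>R ?e - \<mu>)) $ i * ?p (x0 + y *\<^sub>R ?e)) * monomial \<beta> (x0 + y *\<^sub>R ?e)) (at y)"
        by (rule DERIV_mult[OF mono_shift_deriv gauss_line_deriv[OF spd]])
      then show ?thesis unfolding qS_def by (simp add: algebra_simps)
    qed
    show "continuous_on UNIV (\<lambda>y. ?G (x0 + y *\<^sub>R ?e))"
      by (rule continuous_on_compose2[OF Gc]) (auto intro!: continuous_intros)
    show "integrable lborel (\<lambda>y. ?G (x0 + y *\<^sub>R ?e))"
      by (rule line_integrable[OF Gm b c])
    show "((\<lambda>y. ?H (x0 + y *\<^sub>R ?e)) \<longlongrightarrow> 0) at_top" by (rule line_lim(1)[OF b' c'])
    show "((\<lambda>y. ?H (x0 + y *\<^sub>R ?e)) \<longlongrightarrow> 0) at_bot" by (rule line_lim(2)[OF b' c'])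
  qed
qed

lemma gauss_prob:
  fixes \<Sigma> :: "real^'n::finite^'n"
  assumes spd: "sym_pos_def \<Sigma>"
  shows "prob_space (gaussian \<mu> \<Sigma>)"
proof (rule prob_spaceI)
  have "emeasure (gaussian \<mu> \<Sigma>) UNIV = (\<integral>\<^sup>+x. ennreal (gauss_density \<mu> \<Sigma> x) * indicator UNIV x \<partial>lborel)"
    unfolding gaussian_def by (rule emeasure_density) auto
  also have "\<dots> = 1" using gauss_total[OF spd, of \<mu>] by simp
  finally show "emeasure (gaussian \<mu> \<Sigma>) (space (gaussian \<mu> \<Sigma>)) = 1"
    by (simp add: gaussian_def)
qed

lemma gauss_mono_int:
  fixes \<Sigma> :: "real^'n::finite^'n"
  assumes spd: "sym_pos_def \<Sigma>"
  shows "integrable (gaussian \<mu> \<Sigma>) (monomial \<beta>)"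
proof -
  have mb: "\<And>x. \<bar>monomial \<beta> x\<bar> \<le> 1 * (1 + norm x) ^ mi_order \<beta>" using mono_bound by simp
  obtain C c where c: "c > 0" and b: "\<And>x. \<bar>monomial \<beta> x * gauss_density \<mu> \<Sigma> x\<bar> \<le> C * exp (- c * (norm (x - \<mu>))\<^sup>2)"
    using gbound[OF spd mb, where \<mu>=\<mu>] by blast
  have "integrable lborel (\<lambda>x. monomial \<beta> x * gauss_density \<mu> \<Sigma> x)"
    by (rule integrable_gauss_dom[OF _ c b]) measurable
  then have "integrable lborel (\<lambda>x. gauss_density \<mu> \<Sigma> x *\<^sub>R monomial \<beta> x)" by (simp add: mult.commute)
  then show ?thesis unfolding gaussian_def
    by (subst integrable_density) (auto simp: gauss_density_nonneg[OF spd])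
qed

lemma stein_pointwise:
  "stein_op \<mu> \<Sigma> (monomial \<alpha>) x = (\<Sum>i\<in>UNIV. real (\<alpha> i) * qS \<mu> \<Sigma> (decr \<alpha> i) i x)"
proof -
  have "stein_op \<mu> \<Sigma> (monomial \<alpha>) x = (\<Sum>i\<in>UNIV. real (\<alpha> i) * real (\<alpha> i - 1) * monomial (\<alpha>(i := \<alpha> i - 1 - 1)) x)
        + (\<Sum>i\<in>UNIV. real (\<alpha> i) * monomial (decr \<alpha> i) x * (- (matrix_inv \<Sigma> *v (x - \<mu>)) $ i))"
    unfolding stein_op_def laplacian_def partial_partial_mono partial_mono gauss_score_def
    by (simp only: vector_uminus_component)
  also have "\<dots> = (\<Sum>i\<in>UNIV. real (\<alpha> i) * real (\<alpha> i - 1) * monomial (\<alpha>(i := \<alpha> i - 1 - 1)) x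
        + real (\<alpha> i) * monomial (decr \<alpha> i) x * (- (matrix_inv \<Sigma> *v (x - \<mu>)) $ i))"
    by (rule sum.distrib[symmetric])
  also have "\<dots> = (\<Sum>i\<in>UNIV. real (\<alpha> i) * qS \<mu> \<Sigma> (decr \<alpha> i) i x)"
    unfolding qS_def by (intro sum.cong refl) (simp add: algebra_simps)
  finally show ?thesis .
qed

lemma stein_P_zero:
  fixes \<Sigma> :: "real^'n::finite^'n"
  assumes spd: "sym_pos_def \<Sigma>"
  shows "(\<integral>x. stein_op \<mu> \<Sigma> (monomial \<alpha>) x \<partial>gaussian \<mu> \<Sigma>) = 0"
proof -
  have sm: "stein_op \<mu> \<Sigma> (monomial \<alpha>) \<in> borel_measurable borel"
    unfolding stein_pointwise[abs_def]
    using borel_measurable_continuous_onI[OF qS_cont] by measurable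
  have "(\<integral>x. stein_op \<mu> \<Sigma> (monomial \<alpha>) x \<partial>gaussian \<mu> \<Sigma>) = (\<integral>x. gauss_density \<mu> \<Sigma> x *\<^sub>R stein_op \<mu> \<Sigma> (monomial \<alpha>) x \<partial>lborel)"
    unfolding gaussian_def by (rule integral_density) (use sm gauss_density_nonneg[OF spd] in auto)
  also have "\<dots> = (\<integral>x. (\<Sum>i\<in>UNIV. real (\<alpha> i) * (qS \<mu> \<Sigma> (decr \<alpha> i) i x * gauss_density \<mu> \<Sigma> x)) \<partial>lborel)"
    unfolding stein_pointwise by (simp add: sum_distrib_left algebra_simps)
  also have "\<dots> = (\<Sum>i\<in>UNIV. real (\<alpha> i) * (\<integral>x. qS \<mu> \<Sigma> (decr \<alpha> i) i x * gauss_density \<mu> \<Sigma> x \<partial>lborel))"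
    by (subst Bochner_Integration.integral_sum)
       (auto intro: qS_integrable[OF spd])
  also have "\<dots> = 0" by (simp add: stein_gauss[OF spd])
  finally show ?thesis .
qed

lemma mono_bound0: "\<bar>monomial \<beta> x\<bar> \<le> norm x ^ mi_order \<beta>"
proof -
  have "\<bar>monomial \<beta> x\<bar> = (\<Prod>i\<in>UNIV. \<bar>x $ i\<bar> ^ \<beta> i)"
    unfolding monomial_def by (simp add: abs_prod power_abs)
  also have "\<dots> \<le> (\<Prod>i\<in>UNIV. norm x ^ \<beta> i)"
    by (intro prod_mono conjI power_mono) (auto intro: component_le_norm_cart)
  also have "\<dots> = norm x ^ mi_order \<beta>"
    unfolding mi_order_def power_sum ..
  finally show ?thesis .
qed

lemma Q_mono_int:
  fixes Q :: "(real^'n::finite) measure"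
  assumes sQ: "sets Q = sets borel" and iQ: "\<forall>k\<le>r. integrable Q (\<lambda>x. norm x ^ k)" and o: "mi_order \<beta> \<le> r"
  shows "integrable Q (monomial \<beta>)"
proof (rule Bochner_Integration.integrable_bound)
  show "integrable Q (\<lambda>x. norm x ^ mi_order \<beta>)" using iQ o by blast
  show "monomial \<beta> \<in> borel_measurable Q"
    using mono_meas measurable_cong_sets[OF sQ refl] by blast
  show "AE x in Q. norm (monomial \<beta> x) \<le> norm (norm x ^ mi_order \<beta>)"
    using mono_bound0 by (auto intro!: AE_I2)
qed

lemma mint_mono: "mint R k \<Longrightarrow> j \<le> k \<Longrightarrow> mint R j"
  unfolding mint_def by auto

lemma mo_zero: "mi_order \<beta> = 0 \<Longrightarrow> \<beta> = (\<lambda>_. 0)"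
  unfolding mi_order_def by (auto simp: fun_eq_iff)

lemma mono_zero: "monomial (\<lambda>_. 0) x = 1"
  unfolding monomial_def by simp

theorem proposition1:
  fixes r :: nat and \<mu> :: "real^'n::finite" and \<Sigma> :: "real^'n^'n"
    and Q :: "(real^'n) measure"
  assumes "r \<ge> 1"
    and "sym_pos_def \<Sigma>"
    and "prob_space Q" and "sets Q = sets borel"
    and "\<forall>k\<le>r. integrable Q (\<lambda>x. norm x ^ k)"
  shows "PSD r \<mu> \<Sigma> Q = 0 \<longleftrightarrow>
    (\<forall>\<alpha>::'n \<Rightarrow> nat. mi_order \<alpha> \<le> r \<longrightarrow>
       (\<integral>x. monomial \<alpha> x \<partial>Q) = (\<integral>x. monomial \<alpha> x \<partial>gaussian \<mu> \<Sigma>))"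
proof -
  note spd = assms(2)
  let ?S = "matrix_inv \<Sigma>"
  let ?P = "gaussian \<mu> \<Sigma>"
  define mQ where "mQ \<beta> = (\<integral>x. monomial \<beta> x \<partial>Q)" for \<beta> :: "'n \<Rightarrow> nat"
  define mP where "mP \<beta> = (\<integral>x. monomial \<beta> x \<partial>?P)" for \<beta> :: "'n \<Rightarrow> nat"
  define A where "A = {\<alpha>::'n \<Rightarrow> nat. 1 \<le> mi_order \<alpha> \<and> mi_order \<alpha> \<le> r}"
  have finA: "finite A" unfolding A_def by (rule finite_subset[OF _ finite_mo_le[of r]]) auto
  have mintQ: "mint Q r" unfolding mint_def using Q_mono_int[OF assms(4,5)] by blast
  have mintP: "mint ?P k" for k unfolding mint_def using gauss_mono_int[OF spd] by blast
  have LQ: "(\<integral>x. stein_op \<mu> \<Sigma> (monomial \<alpha>) x \<partial>Q) = Lin ?S \<mu> mQ \<alpha>" if "mi_order \<alpha> \<le> r" for \<alpha>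
    unfolding mQ_def by (rule integral_stein_mono[OF mint_mono[OF mintQ that]])
  have LP: "Lin ?S \<mu> mP \<alpha> = 0" for \<alpha>
    using integral_stein_mono[OF mintP, where \<alpha>=\<alpha> and \<mu>=\<mu> and \<Sigma>=\<Sigma>] stein_P_zero[OF spd, where \<mu>=\<mu> and \<alpha>=\<alpha>]
    unfolding mP_def by simp
  have PSDe: "PSD r \<mu> \<Sigma> Q = sqrt (\<Sum>\<alpha>\<in>A. (\<integral>x. stein_op \<mu> \<Sigma> (monomial \<alpha>) x \<partial>Q)\<^sup>2)"
    unfolding PSD_def A_def ..
  show ?thesis
  proof
    assume "PSD r \<mu> \<Sigma> Q = 0"
    then have "(\<Sum>\<alpha>\<in>A. (\<integral>x. stein_op \<mu> \<Sigma> (monomial \<alpha>) x \<partial>Q)\<^sup>2) = 0" unfolding PSDe by simp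
    then have "\<forall>\<alpha>\<in>A. (\<integral>x. stein_op \<mu> \<Sigma> (monomial \<alpha>) x \<partial>Q)\<^sup>2 = 0"
      using sum_nonneg_eq_0_iff[OF finA, of "\<lambda>\<alpha>. (\<integral>x. stein_op \<mu> \<Sigma> (monomial \<alpha>) x \<partial>Q)\<^sup>2"] by simp
    then have LQ0: "Lin ?S \<mu> mQ \<alpha> = 0" if "\<alpha> \<in> A" for \<alpha> using LQ that unfolding A_def by auto
    define d where "d \<beta> = mQ \<beta> - mP \<beta>" for \<beta>
    have Ld: "Lin ?S \<mu> d \<alpha> = 0" if "\<alpha> \<in> A" for \<alpha>
      unfolding d_def Lin_diff using LQ0[OF that] LP by simp
    have pdS: "v \<bullet> (?S *v v) > 0" if "v \<noteq> 0" for v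
      using spd_facts(4)[OF spd that] unfolding qf_def .
    have main: "k \<le> r \<Longrightarrow> (\<forall>\<beta>. mi_order \<beta> = k \<longrightarrow> d \<beta> = 0)" for k
    proof (induction k rule: less_induct)
      case (less k)
      show ?case
      proof (cases "k = 0")
        case True
        have q1: "mQ (\<lambda>_. 0) = 1"
        proof -
          have "measure Q (space Q) = 1" using prob_space.prob_space[OF assms(3)] .
          then show ?thesis unfolding mQ_def mono_zero by simp
        qed
        have p1: "mP (\<lambda>_. 0) = 1"
        proof -
          have "measure ?P (space ?P) = 1" using prob_space.prob_space[OF gauss_prob[OF spd]] .
          then show ?thesis unfolding mP_def mono_zero by simp
        qed
        show ?thesis
        proof (intro allI impI)
          fix \<beta> :: "'n \<Rightarrow> nat" assume "mi_order \<beta> = k"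
          then have "\<beta> = (\<lambda>_. 0)" using True mo_zero by blast
          then show "d \<beta> = 0" unfolding d_def using q1 p1 by simp
        qed
      next
        case False
        have low: "d \<beta> = 0" if "mi_order \<beta> < k" for \<beta>
        proof -
          have "mi_order \<beta> \<le> r" using that less.prems by simp
          then have "\<forall>\<beta>'. mi_order \<beta>' = mi_order \<beta> \<longrightarrow> d \<beta>' = 0" using less.IH[OF that] by blast
          then show ?thesis by blast
        qed
        have hs: "(\<Sum>i\<in>UNIV. \<Sum>l\<in>UNIV. real (\<alpha> i) * ?S $ i $ l * d (incr (decr \<alpha> i) l)) = 0"
          if "mi_order \<alpha> = k" for \<alpha>
        proof -
          have "\<alpha> \<in> A" using that False less.prems unfolding A_def by auto
          then have z: "Lin ?S \<mu> d \<alpha> = 0" by (rule Ld)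
          have "Lin ?S \<mu> d \<alpha> = - (\<Sum>i\<in>UNIV. \<Sum>l\<in>UNIV. real (\<alpha> i) * ?S $ i $ l * d (incr (decr \<alpha> i) l))"
            by (rule Lin_top) (use low that in blast)
          then show ?thesis using z by linarith
        qed
        have k1: "k \<ge> 1" using False by simp
        have "d \<beta> = 0" if "mi_order \<beta> = k" for \<beta>
          by (rule quad_step[OF pdS k1 hs that])
        then show ?thesis by blast
      qed
    qed
    show "\<forall>\<alpha>::'n \<Rightarrow> nat. mi_order \<alpha> \<le> r \<longrightarrow> (\<integral>x. monomial \<alpha> x \<partial>Q) = (\<integral>x. monomial \<alpha> x \<partial>?P)"
    proof (intro allI impI)
      fix \<alpha> :: "'n \<Rightarrow> nat" assume "mi_order \<alpha> \<le> r"
      then have "d \<alpha> = 0" using main[of "mi_order \<alpha>"] by blast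
      then show "(\<integral>x. monomial \<alpha> x \<partial>Q) = (\<integral>x. monomial \<alpha> x \<partial>?P)" unfolding d_def mQ_def mP_def by simp
    qed
  next
    assume eq: "\<forall>\<alpha>::'n \<Rightarrow> nat. mi_order \<alpha> \<le> r \<longrightarrow> (\<integral>x. monomial \<alpha> x \<partial>Q) = (\<integral>x. monomial \<alpha> x \<partial>?P)"
    have "(\<integral>x. stein_op \<mu> \<Sigma> (monomial \<alpha>) x \<partial>Q) = 0" if "\<alpha> \<in> A" for \<alpha>
    proof -
      have o: "mi_order \<alpha> \<le> r" using that unfolding A_def by auto
      have "Lin ?S \<mu> mQ \<alpha> = Lin ?S \<mu> mP \<alpha>"
        by (rule Lin_local) (use eq o in \<open>auto simp: mQ_def mP_def\<close>)
      then show ?thesis using LQ[OF o] LP by simp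
    qed
    then show "PSD r \<mu> \<Sigma> Q = 0" unfolding PSDe by simp
  qed
qed

end
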